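(* Let $(M,d)$ be a complete metric space and $X\subseteq M$ compact. Assume that every $\mu\in P(X)$ admits a barycenter in $M$, and that the barycentric convex hull $Y=conv(X)$ is compact. Then there exists a circumcenter $\nu\in P(M)$ of $i(X)$ in $(P(M),W_2)$, and the square $R^2$ of the circumradius $R$ of $i(X)$ equals both $\max_{\mu\in P(X)}Var(\mu)$ and $\min_{\bar\nu\in P(Y)}AVar(\bar\nu)$. Furthermore, any $\bar\mu\in P(X)$ maximizing the variance satisfies $W_2(\delta_x,\nu)=R$ for $\bar\mu$-almost every $x$, and if $\bar\nu$ is any other circumcenter of $i(X)$, then also $W_2(\delta_x,\bar\nu)=R$ for $\bar\mu$-almost every $x$.
   Context: $P(\cdot)$ denotes Borel probability measures. For $\mu\in P(X)$, $Var(\mu)=\inf_{y\in M}\int_X d^2(x,y)\,d\mu(x)$, and a barycenter of $\mu$ is a point $y\in M$ attaining this infimum. $conv(X)$ is the set of all barycenters in $M$ of measures $\mu\in P(X)$. For $\bar\nu\in P(Y)$, $AVar(\bar\nu)=\max_{x\in X}\int_Y d^2(x,y)\,d\bar\nu(y)$. $W_2$ is the Wasserstein distance on $P(M)$: $W_2^2(\mu,\nu)=\inf_\gamma\int_{M\times M}d^2(x,y)\,d\gamma(x,y)$ over couplings $\gamma$ of $\mu,\nu$; in particular $W_2^2(\delta_x,\nu)=\int_M d^2(x,y)\,d\nu(y)$. The map $i:X\to P(M)$ is $i(x)=\delta_x$. The circumradius of $i(X)$ is $\inf_{\nu\in P(M)}\sup_{x\in X}W_2(\delta_x,\nu)$,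 and a circumcenter of $i(X)$ is a $\nu\in P(M)$ with $\sup_{x\in X}W_2(\delta_x,\nu)$ equal to this circumradius. *)

theory Defs
  imports "HOL-Probability.Probability"
begin

text \<open>Borel probability measures on the (complete metric) space M, modelled as the type 'a.\<close>
definition PM :: "'a::metric_space measure set" where
  "PM = {\<mu>. prob_space \<mu> \<and> sets \<mu> = sets borel}"

text \<open>P(X), identified with the Borel probability measures on M concentrated on X.\<close>
definition PX :: "'a::metric_space set \<Rightarrow> 'a measure set" where
  "PX X = {\<mu> \<in> PM. emeasure \<mu> X = 1}"

definition Var :: "'a::metric_space measure \<Rightarrow> real" where
  "Var \<mu> = (INF y. \<integral>x. (dist x y)\<^sup>2 \<partial>\<mu>)"

definition barycenter :: "'a::metric_space measure \<Rightarrow> 'a \<Rightarrow> bool" where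
  "barycenter \<mu> y \<longleftrightarrow> (\<integral>x. (dist x y)\<^sup>2 \<partial>\<mu>) = Var \<mu>"

definition conv :: "'a::metric_space set \<Rightarrow> 'a set" where
  "conv X = {y. \<exists>\<mu>\<in>PX X. barycenter \<mu> y}"

definition AVar :: "'a::metric_space set \<Rightarrow> 'a measure \<Rightarrow> real" where
  "AVar X \<nu> = (SUP x\<in>X. \<integral>y. (dist x y)\<^sup>2 \<partial>\<nu>)"

text \<open>Squared Wasserstein distance W_2^2(delta_x, nu) = integral of d^2(x,y) d nu(y) (possibly infinite).\<close>
definition W2sq :: "'a::metric_space \<Rightarrow> 'a measure \<Rightarrow> ennreal" where
  "W2sq x \<nu> = (\<integral>\<^sup>+ y. ennreal ((dist x y)\<^sup>2) \<partial>\<nu>)"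

definition W2 :: "'a::metric_space \<Rightarrow> 'a measure \<Rightarrow> ennreal" where
  "W2 x \<nu> = (if W2sq x \<nu> = \<infinity> then \<infinity> else ennreal (sqrt (enn2real (W2sq x \<nu>))))"

definition circumradius :: "'a::metric_space set \<Rightarrow> ennreal" where
  "circumradius X = (INF \<nu>\<in>PM. SUP x\<in>X. W2 x \<nu>)"

definition circumcenter :: "'a::metric_space set \<Rightarrow> 'a measure \<Rightarrow> bool" where
  "circumcenter X \<nu> \<longleftrightarrow> \<nu> \<in> PM \<and> (SUP x\<in>X. W2 x \<nu>) = circumradius X"

end

theory Submission
  imports Defs
begin

definition pdist :: "'i set \<Rightarrow> ('i \<Rightarrow> real) set" where
  "pdist A = {x. (\<forall>a. 0 \<le> x a) \<and> (\<forall>a. a \<notin> A \<longrightarrow> x a = 0) \<and> sum x A = 1}"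

lemma compact_box01:
  "compact (Pi\<^sub>E UNIV (\<lambda>i::'i::countable. if i \<in> A then {0..1::real} else {0}))"
proof -
  have "compactin (product_topology (\<lambda>i. euclidean) UNIV)
      (Pi\<^sub>E UNIV (\<lambda>i::'i. if i \<in> A then {0..1::real} else {0}))"
    by (auto simp: compactin_PiE)
  then show ?thesis by (simp add: euclidean_product_topology)
qed

lemma pdist_eq:
  assumes "finite A"
  shows "pdist A = Pi\<^sub>E UNIV (\<lambda>i. if i \<in> A then {0..1::real} else {0}) \<inter> {x. sum x A = 1}"
proof (intro set_eqI iffI)
  fix x assume x: "x \<in> pdist A"
  have "x a \<le> 1" if "a \<in> A" for a
  proof -
    have "x a \<le> sum x A" using x that assms
      by (intro member_le_sum) (auto simp: pdist_def)
    then show ?thesis using x by (simp add: pdist_def)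
  qed
  then show "x \<in> Pi\<^sub>E UNIV (\<lambda>i. if i \<in> A then {0..1::real} else {0}) \<inter> {x. sum x A = 1}"
    using x by (auto simp: pdist_def PiE_def Pi_def)
next
  fix x assume "x \<in> Pi\<^sub>E UNIV (\<lambda>i. if i \<in> A then {0..1::real} else {0}) \<inter> {x. sum x A = 1}"
  then show "x \<in> pdist A"
    by (auto simp: pdist_def PiE_def Pi_def split: if_splits)
qed

lemma compact_pdist:
  fixes A :: "'i::countable set"
  assumes "finite A"
  shows "compact (pdist A)"
proof -
  have "closed {x::'i\<Rightarrow>real. sum x A = 1}"
    by (intro closed_Collect_eq continuous_intros continuous_on_sum) auto
  then show ?thesis unfolding pdist_eq[OF assms]
    by (intro compact_Int_closed compact_box01)
qed

lemma pdist_nonempty: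
  assumes "a0 \<in> A" "finite A"
  shows "(\<lambda>a. if a = a0 then 1 else 0) \<in> pdist A"
  using assms by (auto simp: pdist_def)

lemma continuous_on_Min_fin:
  fixes f :: "'b \<Rightarrow> 'x::topological_space \<Rightarrow> real"
  assumes "finite B" "B \<noteq> {}" "\<And>b. b \<in> B \<Longrightarrow> continuous_on S (f b)"
  shows "continuous_on S (\<lambda>x. Min ((\<lambda>b. f b x) ` B))"
  using assms
proof (induction B rule: finite_ne_induct)
  case (singleton b) then show ?case by simp
next
  case (insert b F)
  have "(\<lambda>x. Min ((\<lambda>b. f b x) ` insert b F)) = (\<lambda>x. min (f b x) (Min ((\<lambda>b. f b x) ` F)))"
    using insert by (auto simp: Min_insert)
  then show ?case using insert by (auto intro!: continuous_on_min)
qed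

definition lo :: "'i set \<Rightarrow> 'j set \<Rightarrow> ('i \<Rightarrow> 'j \<Rightarrow> real) \<Rightarrow> ('i \<Rightarrow> real) \<Rightarrow> real" where
  "lo A B c x = Min ((\<lambda>b. \<Sum>a\<in>A. x a * c a b) ` B)"

definition hi :: "'i set \<Rightarrow> 'j set \<Rightarrow> ('i \<Rightarrow> 'j \<Rightarrow> real) \<Rightarrow> ('j \<Rightarrow> real) \<Rightarrow> real" where
  "hi A B c y = Max ((\<lambda>a. \<Sum>b\<in>B. y b * c a b) ` A)"

lemma Min_neg_Max:
  fixes f :: "'b \<Rightarrow> real"
  assumes "finite A" "A \<noteq> {}"
  shows "Min ((\<lambda>a. - f a) ` A) = - Max (f ` A)"
proof (rule antisym)
  obtain a where a: "a \<in> A" "f a = Max (f ` A)"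
    using Max_in[of "f ` A"] assms by (metis empty_is_image finite_imageI imageE)
  have "Min ((\<lambda>a. - f a) ` A) \<le> - f a"
    by (rule Min_le[OF finite_imageI[OF assms(1)] imageI[OF a(1)]])
  then show "Min ((\<lambda>a. - f a) ` A) \<le> - Max (f ` A)" using a by simp
next
  have "Min ((\<lambda>a. - f a) ` A) \<in> (\<lambda>a. - f a) ` A" by (rule Min_in) (use assms in auto)
  then obtain a where a: "a \<in> A" "- f a = Min ((\<lambda>a. - f a) ` A)" by (metis imageE)
  have "f a \<le> Max (f ` A)" using a assms by auto
  then show "- Max (f ` A) \<le> Min ((\<lambda>a. - f a) ` A)" using a by linarith
qed

lemma lo_neg_hi:
  assumes "finite A" "A \<noteq> {}"
  shows "lo B A (\<lambda>b a. - c a b) y = - hi A B c y"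
proof -
  have "lo B A (\<lambda>b a. - c a b) y = Min ((\<lambda>a. - (\<Sum>b\<in>B. y b * c a b)) ` A)"
    unfolding lo_def by (simp add: sum_negf)
  also have "\<dots> = - hi A B c y" unfolding hi_def by (rule Min_neg_Max[OF assms])
  finally show ?thesis .
qed

lemma hi_neg_lo:
  assumes "finite B" "B \<noteq> {}"
  shows "hi B A (\<lambda>b a. - c a b) x = - lo A B c x"
proof -
  have "hi B A (\<lambda>b a. - c a b) x = Max ((\<lambda>b. - (\<Sum>a\<in>A. x a * c a b)) ` B)"
    unfolding hi_def by (simp add: sum_negf)
  also have "\<dots> = - lo A B c x" unfolding lo_def
    using Min_neg_Max[OF assms, of "\<lambda>b. - (\<Sum>a\<in>A. x a * c a b)"] by simp
  finally show ?thesis .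
qed

lemma lo_le: "finite B \<Longrightarrow> b \<in> B \<Longrightarrow> lo A B c x \<le> (\<Sum>a\<in>A. x a * c a b)"
  unfolding lo_def by auto

lemma le_hi: "finite A \<Longrightarrow> a \<in> A \<Longrightarrow> (\<Sum>b\<in>B. y b * c a b) \<le> hi A B c y"
  unfolding hi_def by auto

lemma pdist_mono:
  assumes "v \<in> pdist B'" "B' \<subseteq> B" "finite B"
  shows "v \<in> pdist B"
proof -
  have "sum v B' = sum v B"
    by (rule sum.mono_neutral_left) (use assms in \<open>auto simp: pdist_def\<close>)
  then show ?thesis using assms by (auto simp: pdist_def)
qed

lemma loomis_step:
  fixes c :: "'i \<Rightarrow> 'j \<Rightarrow> real"
  assumes fin: "finite A" "A \<noteq> {}" "finite B" "B \<noteq> {}"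
  and IH: "\<And>B'. B' \<subseteq> B \<Longrightarrow> B' \<noteq> B \<Longrightarrow> B' \<noteq> {} \<Longrightarrow> \<exists>l. \<exists>w\<in>pdist A. \<exists>v\<in>pdist B'.
          (\<forall>b\<in>B'. l \<le> (\<Sum>a\<in>A. w a * c a b)) \<and> (\<forall>a\<in>A. (\<Sum>b\<in>B'. v b * c a b) \<le> l)"
  and x0: "x0 \<in> pdist A" "\<And>x. x \<in> pdist A \<Longrightarrow> lo A B c x \<le> lo A B c x0"
  and y0: "y0 \<in> pdist B" "\<And>y. y \<in> pdist B \<Longrightarrow> hi A B c y0 \<le> hi A B c y"
  and b0: "b0 \<in> B" "lo A B c x0 < (\<Sum>a\<in>A. x0 a * c a b0)"
  shows "hi A B c y0 \<le> lo A B c x0"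
proof (cases "B = {b0}")
  case True
  then show ?thesis using b0 by (simp add: lo_def)
next
  case False
  define B' where "B' = B - {b0}"
  have B': "B' \<subseteq> B" "B' \<noteq> B" "B' \<noteq> {}" using False b0 by (auto simp: B'_def)
  obtain l w v where w: "w \<in> pdist A" and v: "v \<in> pdist B'"
    and hw: "\<forall>b\<in>B'. l \<le> (\<Sum>a\<in>A. w a * c a b)" and hv: "\<forall>a\<in>A. (\<Sum>b\<in>B'. v b * c a b) \<le> l"
    using IH[OF B'] by blast
  have vB: "v \<in> pdist B" using pdist_mono[OF v B'(1) fin(3)] .
  have "hi A B c v \<le> l"
  proof -
    have "(\<Sum>b\<in>B'. v b * c a b) = (\<Sum>b\<in>B. v b * c a b)" for a
      by (rule sum.mono_neutral_left) (use v fin B' in \<open>auto simp: pdist_def\<close>)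
    then have "\<forall>a\<in>A. (\<Sum>b\<in>B. v b * c a b) \<le> l" using hv by simp
    then show ?thesis using fin unfolding hi_def by (simp add: Max_le_iff)
  qed
  then have hl: "hi A B c y0 \<le> l" using y0(2)[OF vB] by linarith
  show ?thesis
  proof (rule ccontr)
    assume "\<not> ?thesis"
    then have lol: "lo A B c x0 < l" using hl by linarith
    define s0 where "s0 = (\<Sum>a\<in>A. x0 a * c a b0)"
    define s1 where "s1 = (\<Sum>a\<in>A. w a * c a b0)"
    define \<delta> where "\<delta> = s0 - lo A B c x0"
    define e where "e = \<bar>s0 - s1\<bar>"
    define t where "t = \<delta> / (\<delta> + e)"
    have \<delta>: "\<delta> > 0" using b0 by (simp add: \<delta>_def s0_def)
    have e: "e \<ge> 0" by (simp add: e_def)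
    have t: "0 < t" "t \<le> 1" using \<delta> e by (auto simp: t_def)
    have te: "t * e < \<delta>"
    proof -
      have "t * e = \<delta> * e / (\<delta> + e)" by (simp add: t_def)
      also have "\<dots> < \<delta>" using \<delta> e by (simp add: field_simps)
      finally show ?thesis .
    qed
    define xt where "xt = (\<lambda>a. (1 - t) * x0 a + t * w a)"
    have xt: "xt \<in> pdist A"
    proof -
      have "sum xt A = (1 - t) * sum x0 A + t * sum w A"
        unfolding xt_def by (simp add: sum.distrib sum_distrib_left)
      then show ?thesis using x0(1) w t unfolding pdist_def xt_def
        by (auto intro!: add_nonneg_nonneg mult_nonneg_nonneg)
    qed
    have sxt: "(\<Sum>a\<in>A. xt a * c a b) = (1 - t) * (\<Sum>a\<in>A. x0 a * c a b) + t * (\<Sum>a\<in>A. w a * c a b)" for b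
    proof -
      have "(\<Sum>a\<in>A. xt a * c a b) = (\<Sum>a\<in>A. (1 - t) * (x0 a * c a b) + t * (w a * c a b))"
        by (rule sum.cong) (auto simp: xt_def algebra_simps)
      also have "\<dots> = (1 - t) * (\<Sum>a\<in>A. x0 a * c a b) + t * (\<Sum>a\<in>A. w a * c a b)"
        by (simp add: sum.distrib sum_distrib_left)
      finally show ?thesis .
    qed
    have "lo A B c x0 < (\<Sum>a\<in>A. xt a * c a b)" if b: "b \<in> B" for b
    proof (cases "b = b0")
      case True
      have "s0 - t * e \<le> (1 - t) * s0 + t * s1"
      proof -
        have "t * (s0 - s1) \<le> t * e" using t by (intro mult_left_mono) (auto simp: e_def)
        then show ?thesis by (simp add: algebra_simps)
      qed
      then show ?thesis using True te sxt[of b0] by (simp add: s0_def s1_def \<delta>_def)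
    next
      case False
      then have bB': "b \<in> B'" using b by (simp add: B'_def)
      have h1: "lo A B c x0 \<le> (\<Sum>a\<in>A. x0 a * c a b)" using lo_le[OF fin(3) b] .
      have h2: "l \<le> (\<Sum>a\<in>A. w a * c a b)" using hw bB' by auto
      have "(1 - t) * lo A B c x0 + t * lo A B c x0 < (1 - t) * lo A B c x0 + t * l"
        using t lol by simp
      also have "\<dots> \<le> (1 - t) * (\<Sum>a\<in>A. x0 a * c a b) + t * (\<Sum>a\<in>A. w a * c a b)"
        using t h1 h2 by (intro add_mono mult_left_mono) auto
      finally show ?thesis using sxt[of b] by (simp add: algebra_simps)
    qed
    then have "lo A B c x0 < lo A B c xt" unfolding lo_def[of A B c xt] using fin
      by (subst Min_gr_iff) auto
    with x0(2)[OF xt] show False by linarith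
  qed
qed

lemma minimax:
  fixes c :: "'i::countable \<Rightarrow> 'j::countable \<Rightarrow> real"
  assumes "finite A" "A \<noteq> {}" "finite B" "B \<noteq> {}"
  shows "\<exists>l. \<exists>w\<in>pdist A. \<exists>v\<in>pdist B.
     (\<forall>b\<in>B. l \<le> (\<Sum>a\<in>A. w a * c a b)) \<and> (\<forall>a\<in>A. (\<Sum>b\<in>B. v b * c a b) \<le> l)"
  using assms
proof (induction "card A + card B" arbitrary: A B rule: less_induct)
  case less
  note fin = less.prems
  obtain a1 where a1: "a1 \<in> A" using fin by auto
  obtain b1 where b1: "b1 \<in> B" using fin by auto
  have cA: "compact (pdist A)" "pdist A \<noteq> {}"
    using compact_pdist pdist_nonempty[OF a1] fin by auto
  have cB: "compact (pdist B)" "pdist B \<noteq> {}"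
    using compact_pdist pdist_nonempty[OF b1] fin by auto
  have cc: "\<And>S a. continuous_on S (\<lambda>x::'i\<Rightarrow>real. x a)"
    by (rule continuous_on_subset[OF continuous_on_product_coordinates]) auto
  have cc2: "\<And>S b. continuous_on S (\<lambda>x::'j\<Rightarrow>real. x b)"
    by (rule continuous_on_subset[OF continuous_on_product_coordinates]) auto
  have contlo: "continuous_on (pdist A) (lo A B c)"
    unfolding lo_def
    by (rule continuous_on_Min_fin[where B=B and f="\<lambda>b x. \<Sum>a\<in>A. x a * c a b"])
       (use fin in \<open>auto intro!: continuous_on_sum continuous_on_mult_right cc\<close>)
  have conthi: "continuous_on (pdist B) (\<lambda>y. - hi A B c y)"
  proof -
    have "(\<lambda>y. - hi A B c y) = lo B A (\<lambda>b a. - c a b)"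
      by (rule ext) (simp add: lo_neg_hi[OF fin(1,2)])
    moreover have "continuous_on (pdist B) (lo B A (\<lambda>b a. - c a b))" unfolding lo_def
      by (rule continuous_on_Min_fin[where B=A and f="\<lambda>a y. \<Sum>b\<in>B. y b * - c a b"])
         (use fin in \<open>auto intro!: continuous_on_sum continuous_on_mult_right continuous_on_minus cc2\<close>)
    ultimately show ?thesis by metis
  qed
  obtain x0 where x0: "x0 \<in> pdist A" "\<And>x. x \<in> pdist A \<Longrightarrow> lo A B c x \<le> lo A B c x0"
    using continuous_attains_sup[OF cA contlo] by blast
  obtain y0 where y0: "y0 \<in> pdist B" "\<And>y. y \<in> pdist B \<Longrightarrow> - hi A B c y \<le> - hi A B c y0"
    using continuous_attains_sup[OF cB conthi] by blast
  have y0': "\<And>y. y \<in> pdist B \<Longrightarrow> hi A B c y0 \<le> hi A B c y" using y0(2) by force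
  have key: "hi A B c y0 \<le> lo A B c x0"
  proof (rule ccontr)
    assume nle: "\<not> ?thesis"
    have cases3: "(\<exists>b0\<in>B. lo A B c x0 < (\<Sum>a\<in>A. x0 a * c a b0))
      \<or> (\<exists>a0\<in>A. (\<Sum>b\<in>B. y0 b * c a0 b) < hi A B c y0)
      \<or> ((\<forall>b\<in>B. (\<Sum>a\<in>A. x0 a * c a b) = lo A B c x0) \<and>
               (\<forall>a\<in>A. (\<Sum>b\<in>B. y0 b * c a b) = hi A B c y0))"
    proof -
      { assume n1: "\<not> (\<exists>b0\<in>B. lo A B c x0 < (\<Sum>a\<in>A. x0 a * c a b0))"
          and n2: "\<not> (\<exists>a0\<in>A. (\<Sum>b\<in>B. y0 b * c a0 b) < hi A B c y0)"
        have "\<forall>b\<in>B. (\<Sum>a\<in>A. x0 a * c a b) = lo A B c x0"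
        proof
          fix b assume "b \<in> B"
          then show "(\<Sum>a\<in>A. x0 a * c a b) = lo A B c x0"
            using n1 lo_le[OF fin(3), of b A c x0] by force
        qed
        moreover have "\<forall>a\<in>A. (\<Sum>b\<in>B. y0 b * c a b) = hi A B c y0"
        proof
          fix a assume "a \<in> A"
          then show "(\<Sum>b\<in>B. y0 b * c a b) = hi A B c y0"
            using n2 le_hi[OF fin(1), where a=a and B=B and y=y0 and c=c] by force
        qed
        ultimately have ?thesis by blast }
      then show ?thesis by blast
    qed
    consider (b) "\<exists>b0\<in>B. lo A B c x0 < (\<Sum>a\<in>A. x0 a * c a b0)"
      | (a) "\<exists>a0\<in>A. (\<Sum>b\<in>B. y0 b * c a0 b) < hi A B c y0"
      | (none) "\<forall>b\<in>B. (\<Sum>a\<in>A. x0 a * c a b) = lo A B c x0"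
               "\<forall>a\<in>A. (\<Sum>b\<in>B. y0 b * c a b) = hi A B c y0"
      using cases3 by blast
    then show False
    proof cases
      case b
      then obtain b0 where "b0 \<in> B" "lo A B c x0 < (\<Sum>a\<in>A. x0 a * c a b0)" by blast
      have IH: "\<exists>l. \<exists>w\<in>pdist A. \<exists>v\<in>pdist B'.
          (\<forall>b\<in>B'. l \<le> (\<Sum>a\<in>A. w a * c a b)) \<and> (\<forall>a\<in>A. (\<Sum>b\<in>B'. v b * c a b) \<le> l)"
        if "B' \<subseteq> B" "B' \<noteq> B" "B' \<noteq> {}" for B'
      proof -
        have "card B' < card B" using that fin by (meson psubsetI psubset_card_mono)
        then show ?thesis using less.hyps[of A B'] fin that finite_subset by auto
      qed
      have "hi A B c y0 \<le> lo A B c x0"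
        by (rule loomis_step[OF fin IH x0 y0(1) y0'
              \<open>b0 \<in> B\<close> \<open>lo A B c x0 < _\<close>]) auto
      then show False using nle by simp
    next
      case a
      then obtain a0 where a0: "a0 \<in> A" "(\<Sum>b\<in>B. y0 b * c a0 b) < hi A B c y0" by blast
      let ?c = "\<lambda>b a. - c a b"
      have IH: "\<exists>l. \<exists>w\<in>pdist B. \<exists>v\<in>pdist A'.
          (\<forall>a\<in>A'. l \<le> (\<Sum>b\<in>B. w b * ?c b a)) \<and> (\<forall>b\<in>B. (\<Sum>a\<in>A'. v a * ?c b a) \<le> l)"
        if hA: "A' \<subseteq> A" "A' \<noteq> A" "A' \<noteq> {}" for A'
      proof -
        have "card A' < card A" using hA fin by (meson psubsetI psubset_card_mono)
        then have lt: "card A' + card B < card A + card B" by simp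
        have fA': "finite A'" using finite_subset[OF hA(1) fin(1)] .
        obtain l w v where "w \<in> pdist A'" "v \<in> pdist B"
          "(\<forall>b\<in>B. l \<le> (\<Sum>a\<in>A'. w a * c a b))" "(\<forall>a\<in>A'. (\<Sum>b\<in>B. v b * c a b) \<le> l)"
          using less.hyps[OF lt fA' hA(3) fin(3) fin(4)] by blast
        then show ?thesis
          by (intro exI[of _ "-l"] bexI[of _ v] bexI[of _ w]) (auto simp: sum_negf)
      qed
      have x0': "hi B A ?c x0 \<le> hi B A ?c x" if "x \<in> pdist A" for x
        using x0(2)[OF that] hi_neg_lo[OF fin(3,4), of A c x0] hi_neg_lo[OF fin(3,4), of A c x] by simp
      have y0'': "lo B A ?c y \<le> lo B A ?c y0" if "y \<in> pdist B" for y
        using y0'[OF that] lo_neg_hi[OF fin(1,2), of B c y0] lo_neg_hi[OF fin(1,2), of B c y] by simp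
      have "lo B A ?c y0 < (\<Sum>b\<in>B. y0 b * ?c b a0)"
        using a0 lo_neg_hi[OF fin(1,2), of B c y0] by (simp add: sum_negf)
      then have "hi B A ?c x0 \<le> lo B A ?c y0"
        by (intro loomis_step[OF fin(3,4,1,2) IH y0(1) y0'' x0(1) x0' a0(1)]) auto
      then show False using nle hi_neg_lo[OF fin(3,4), of A c x0] lo_neg_hi[OF fin(1,2), of B c y0] by simp
    next
      case none
      have "(\<Sum>b\<in>B. y0 b * (\<Sum>a\<in>A. x0 a * c a b)) = (\<Sum>a\<in>A. x0 a * (\<Sum>b\<in>B. y0 b * c a b))"
        by (simp add: sum_distrib_left sum.swap[of _ B A] algebra_simps)
      moreover have "(\<Sum>b\<in>B. y0 b * (\<Sum>a\<in>A. x0 a * c a b)) = lo A B c x0"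
        using none(1) y0(1) by (simp add: pdist_def sum_distrib_right[symmetric])
      moreover have "(\<Sum>a\<in>A. x0 a * (\<Sum>b\<in>B. y0 b * c a b)) = hi A B c y0"
        using none(2) x0(1) by (simp add: pdist_def sum_distrib_right[symmetric])
      ultimately show False using nle by simp
    qed
  qed
  show ?case
    by (intro exI[of _ "lo A B c x0"] bexI[OF _ x0(1)] bexI[OF _ y0(1)])
       (use lo_le[OF fin(3)] le_hi[OF fin(1)] key order_trans in blast)
qed


definition rr :: "nat \<Rightarrow> real" where "rr n = (1/2)^n"

lemma rr_pos: "0 < rr n" by (simp add: rr_def)

definition net :: "'a::metric_space set \<Rightarrow> nat \<Rightarrow> 'a list" where
  "net S n = (SOME xs. set xs \<subseteq> S \<and> S \<subseteq> (\<Union>x\<in>set xs. ball x (rr n)))"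

lemma net_ex:
  assumes "compact S"
  shows "\<exists>xs. set xs \<subseteq> S \<and> S \<subseteq> (\<Union>x\<in>set xs. ball x (rr n))"
proof -
  have "S \<subseteq> (\<Union>x\<in>S. ball x (rr n))" using rr_pos by auto
  then obtain D where D: "D \<subseteq> S" "finite D" "S \<subseteq> (\<Union>x\<in>D. ball x (rr n))"
    using compactE_image[OF assms, of S "\<lambda>x. ball x (rr n)"] by auto
  obtain xs where "set xs = D" using finite_list[OF D(2)] by auto
  then show ?thesis using D by auto
qed

lemma net:
  assumes "compact S"
  shows "set (net S n) \<subseteq> S" "S \<subseteq> (\<Union>x\<in>set (net S n). ball x (rr n))"
  using someI_ex[OF net_ex[OF assms, of n]] unfolding net_def by auto

definition NN :: "'a::metric_space set \<Rightarrow> nat \<Rightarrow> nat" where "NN S n = length (net S n)"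

definition dig :: "'a::metric_space set \<Rightarrow> nat \<Rightarrow> 'a \<Rightarrow> nat" where
  "dig S n x = (LEAST j. j < NN S n \<and> dist x (net S n ! j) < rr n)"

lemma dig:
  assumes "compact S" "x \<in> S"
  shows "dig S n x < NN S n" "dist x (net S n ! dig S n x) < rr n"
proof -
  obtain a where a: "a \<in> set (net S n)" "x \<in> ball a (rr n)"
    using net(2)[OF assms(1), of n] assms(2) by auto
  then obtain j where j: "j < NN S n" "net S n ! j = a" by (auto simp: NN_def in_set_conv_nth)
  then have ex: "\<exists>j. j < NN S n \<and> dist x (net S n ! j) < rr n"
    using a(2) by (auto simp: dist_commute)
  from LeastI_ex[OF ex] show "dig S n x < NN S n" "dist x (net S n ! dig S n x) < rr n"
    unfolding dig_def by auto
qed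

definition code :: "'a::metric_space set \<Rightarrow> 'a \<Rightarrow> nat \<Rightarrow> nat list" where
  "code S x n = map (\<lambda>i. dig S i x) [0..<n]"

lemma length_code[simp]: "length (code S x n) = n" by (simp add: code_def)
lemma code_Suc: "code S x (Suc n) = code S x n @ [dig S n x]" by (simp add: code_def)
lemma take_code: "m \<le> n \<Longrightarrow> take m (code S x n) = code S x m"
  by (simp add: code_def take_map)
lemma code_0[simp]: "code S x 0 = []" by (simp add: code_def)

lemma code_dist:
  assumes "compact S" "x \<in> S" "y \<in> S" "code S x (Suc n) = code S y (Suc n)"
  shows "dist x y < 2 * rr n"
proof -
  have e: "dig S n x = dig S n y" using assms(4) by (simp add: code_Suc)
  have "dist x y \<le> dist x (net S n ! dig S n x) + dist y (net S n ! dig S n x)"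
    by (rule dist_triangle2)
  also have "\<dots> < rr n + rr n" using dig(2)[OF assms(1,2), of n] dig(2)[OF assms(1,3), of n] e
    by (intro add_strict_mono) auto
  finally show ?thesis by simp
qed

definition Pk :: "'a::metric_space set \<Rightarrow> nat \<Rightarrow> nat list set" where
  "Pk S k = (\<lambda>x. code S x k) ` S"

lemma finite_Pk:
  assumes "compact S"
  shows "finite (Pk S k)"
proof -
  let ?M = "\<Sum>i<k. NN S i"
  have "Pk S k \<subseteq> {xs. set xs \<subseteq> {..<?M} \<and> length xs = k}"
  proof
    fix p assume "p \<in> Pk S k"
    then obtain x where x: "x \<in> S" "p = code S x k" by (auto simp: Pk_def)
    have "dig S i x < ?M" if "i < k" for i
    proof -
      have "dig S i x < NN S i" using dig[OF assms x(1)] by auto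
      also have "NN S i \<le> ?M" using that by (intro member_le_sum) auto
      finally show ?thesis .
    qed
    then show "p \<in> {xs. set xs \<subseteq> {..<?M} \<and> length xs = k}" using x(2) by (auto simp: code_def)
  qed
  moreover have "finite {xs. set xs \<subseteq> {..<?M} \<and> length xs = k}"
    by (rule finite_lists_length_eq) simp
  ultimately show ?thesis by (rule finite_subset)
qed

lemma Pk_ne: "S \<noteq> {} \<Longrightarrow> Pk S k \<noteq> {}" by (simp add: Pk_def)

definition rep :: "'a::metric_space set \<Rightarrow> nat list \<Rightarrow> 'a" where
  "rep S p = (SOME x. x \<in> S \<and> code S x (length p) = p)"

lemma rep:
  assumes "p \<in> Pk S k"
  shows "rep S p \<in> S" "code S (rep S p) k = p"
proof -
  obtain x where x: "x \<in> S" "p = code S x k" using assms by (auto simp: Pk_def)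
  then have "\<exists>x. x \<in> S \<and> code S x (length p) = p" by auto
  from someI_ex[OF this] show "rep S p \<in> S" "code S (rep S p) k = p"
    using x unfolding rep_def by auto
qed

lemma rep_nil: "S \<noteq> {} \<Longrightarrow> rep S [] \<in> S"
  using rep(1)[of "[]" S 0] by (auto simp: Pk_def)

definition mass :: "'a::metric_space set \<Rightarrow> nat \<Rightarrow> (nat list \<Rightarrow> real) \<Rightarrow> nat list \<Rightarrow> real" where
  "mass S k w p = (\<Sum>q\<in>Pk S k. w q * (if code S (rep S q) (length p) = p then 1 else 0))"

definition consist :: "(nat \<Rightarrow> nat) \<Rightarrow> (nat list \<Rightarrow> real) \<Rightarrow> bool" where
  "consist N m \<longleftrightarrow> m [] = 1 \<and> (\<forall>p. 0 \<le> m p) \<and> (\<forall>p. m p = (\<Sum>j<N (length p). m (p @ [j])))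
     \<and> (\<forall>p j. N (length p) \<le> j \<longrightarrow> m (p @ [j]) = 0)"

lemma mass_consist:
  assumes S: "compact S" and w: "w \<in> pdist (Pk S k)"
  shows "consist (NN S) (mass S k w)"
  unfolding consist_def
proof (intro conjI allI impI)
  show "mass S k w [] = 1" using w by (simp add: mass_def pdist_def)
  show "0 \<le> mass S k w p" for p using w unfolding mass_def pdist_def by (auto intro!: sum_nonneg)
  show "mass S k w p = (\<Sum>j<NN S (length p). mass S k w (p @ [j]))" for p
  proof -
    have "(\<Sum>j<NN S (length p). mass S k w (p @ [j]))
        = (\<Sum>q\<in>Pk S k. \<Sum>j<NN S (length p). w q * (if code S (rep S q) (length p) = p \<and> dig S (length p) (rep S q) = j then 1 else 0))"
      unfolding mass_def by (subst sum.swap) (simp add: code_Suc)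
    also have "\<dots> = (\<Sum>q\<in>Pk S k. w q * (if code S (rep S q) (length p) = p then 1 else 0))"
    proof (rule sum.cong[OF refl])
      fix q assume q: "q \<in> Pk S k"
      have d: "dig S (length p) (rep S q) < NN S (length p)" using dig(1)[OF S rep(1)[OF q]] .
      have "(\<Sum>j<NN S (length p). w q * (if code S (rep S q) (length p) = p \<and> dig S (length p) (rep S q) = j then 1 else 0))
          = (\<Sum>j<NN S (length p). (if dig S (length p) (rep S q) = j then w q * (if code S (rep S q) (length p) = p then 1 else 0) else 0))"
        by (rule sum.cong) auto
      also have "\<dots> = w q * (if code S (rep S q) (length p) = p then 1 else 0)"
        using d by (simp add: sum.delta')
      finally show "(\<Sum>j<NN S (length p). w q * (if code S (rep S q) (length p) = p \<and> dig S (length p) (rep S q) = j then 1 else 0))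
          = w q * (if code S (rep S q) (length p) = p then 1 else 0)" .
    qed
    finally show ?thesis by (simp add: mass_def)
  qed
  show "mass S k w (p @ [j]) = 0" if "NN S (length p) \<le> j" for p j
  proof -
    have "code S (rep S q) (length (p @ [j])) \<noteq> p @ [j]" if q: "q \<in> Pk S k" for q
      using dig(1)[OF S rep(1)[OF q], of "length p"] \<open>NN S (length p) \<le> j\<close> by (auto simp: code_Suc)
    then show ?thesis unfolding mass_def by (intro sum.neutral) auto
  qed
qed

lemma mass_top:
  assumes "length p = k" "finite (Pk S k)"
  shows "mass S k w p = (if p \<in> Pk S k then w p else 0)"
proof -
  have "mass S k w p = (\<Sum>q\<in>Pk S k. if q = p then w q else 0)"
    unfolding mass_def using rep(2) assms(1) by (intro sum.cong) auto
  also have "\<dots> = (if p \<in> Pk S k then w p else 0)"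
    using assms(2) by (simp add: sum.delta')
  finally show ?thesis .
qed

lemma mass_le1:
  assumes "w \<in> pdist (Pk S k)"
  shows "mass S k w p \<le> 1"
proof -
  have "mass S k w p \<le> (\<Sum>q\<in>Pk S k. w q)"
    unfolding mass_def using assms by (intro sum_mono) (auto simp: pdist_def)
  then show ?thesis using assms by (simp add: pdist_def)
qed

definition Lay :: "(nat list \<Rightarrow> real) \<Rightarrow> nat list \<Rightarrow> real" where
  "Lay m p = (\<Sum>i<length p. \<Sum>j<p!i. m (take i p @ [j]))"

definition Iv :: "(nat list \<Rightarrow> real) \<Rightarrow> nat list \<Rightarrow> real set" where
  "Iv m p = {Lay m p ..< Lay m p + m p}"

lemma Lay_nil[simp]: "Lay m [] = 0" by (simp add: Lay_def)

lemma Lay_snoc: "Lay m (p @ [j]) = Lay m p + (\<Sum>j'<j. m (p @ [j']))"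
proof -
  have t1: "take i (p @ [j]) = take i p" if "i < length p" for i
    using that by simp
  have t2: "(p @ [j]) ! i = p ! i" if "i < length p" for i
    using that by (simp add: nth_append_left)
  have "Lay m (p @ [j]) = (\<Sum>i<Suc (length p). \<Sum>j'<(p @ [j])!i. m (take i (p @ [j]) @ [j']))"
    by (simp add: Lay_def)
  also have "\<dots> = (\<Sum>i<length p. \<Sum>j'<(p @ [j])!i. m (take i (p @ [j]) @ [j']))
      + (\<Sum>j'<(p @ [j])!(length p). m (take (length p) (p @ [j]) @ [j']))"
    by (rule sum.lessThan_Suc)
  also have "(\<Sum>i<length p. \<Sum>j'<(p @ [j])!i. m (take i (p @ [j]) @ [j'])) = Lay m p"
    unfolding Lay_def by (rule sum.cong[OF refl]) (simp only: t1 t2 lessThan_iff)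
  also have "(\<Sum>j'<(p @ [j])!(length p). m (take (length p) (p @ [j]) @ [j'])) = (\<Sum>j'<j. m (p @ [j']))"
    by simp
  finally show ?thesis .
qed

lemma consistD:
  assumes "consist N m"
  shows "m [] = 1" "0 \<le> m p" "m p = (\<Sum>j<N (length p). m (p @ [j]))"
    "N (length p) \<le> j \<Longrightarrow> m (p @ [j]) = 0"
  using assms unfolding consist_def by blast+

lemma Iv_nest:
  assumes c: "consist N m"
  shows "Iv m (p @ [j]) \<subseteq> Iv m p"
proof (cases "j < N (length p)")
  case True
  have "(\<Sum>j'<j. m (p @ [j'])) + m (p @ [j]) = (\<Sum>j'<Suc j. m (p @ [j']))" by simp
  also have "\<dots> \<le> (\<Sum>j'<N (length p). m (p @ [j']))"
    using True consistD(2)[OF c] by (intro sum_mono2) auto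
  also have "\<dots> = m p" by (rule consistD(3)[OF c, symmetric])
  finally have h1: "(\<Sum>j'<j. m (p @ [j'])) + m (p @ [j]) \<le> m p" .
  have h2: "0 \<le> (\<Sum>j'<j. m (p @ [j']))" using consistD(2)[OF c] by (intro sum_nonneg) auto
  show ?thesis unfolding Iv_def Lay_snoc using h1 h2 by auto
next
  case False
  then have "m (p @ [j]) = 0" using consistD(4)[OF c] by simp
  then show ?thesis by (simp add: Iv_def)
qed

lemma partial_sum_find:
  fixes a :: "nat \<Rightarrow> real"
  assumes "\<And>j. 0 \<le> a j" "0 \<le> s" "s < (\<Sum>j<n. a j)"
  shows "\<exists>j<n. (\<Sum>i<j. a i) \<le> s \<and> s < (\<Sum>i<j. a i) + a j"
  using assms(3)
proof (induction n)
  case 0 then show ?case using assms(2) by simp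
next
  case (Suc n)
  show ?case
  proof (cases "s < (\<Sum>j<n. a j)")
    case True
    then show ?thesis using Suc.IH by (meson less_SucI)
  next
    case False
    then show ?thesis using Suc.prems by (intro exI[of _ n]) auto
  qed
qed

lemma Iv_split:
  assumes c: "consist N m" and t: "t \<in> Iv m p"
  shows "\<exists>j<N (length p). t \<in> Iv m (p @ [j])"
proof -
  have "\<exists>j<N (length p). (\<Sum>i<j. m (p @ [i])) \<le> t - Lay m p \<and>
      t - Lay m p < (\<Sum>i<j. m (p @ [i])) + m (p @ [j])"
  proof (rule partial_sum_find)
    show "t - Lay m p < (\<Sum>j<N (length p). m (p @ [j]))"
      using t consistD(3)[OF c, of p] by (simp add: Iv_def)
  qed (use t consistD(2)[OF c] in \<open>auto simp: Iv_def\<close>)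
  then show ?thesis unfolding Iv_def Lay_snoc by auto
qed

lemma Iv_uniq:
  assumes c: "consist N m" and t: "t \<in> Iv m (p @ [j])" "t \<in> Iv m (p @ [j'])"
  shows "j = j'"
proof -
  have *: False if "t \<in> Iv m (p @ [a])" "t \<in> Iv m (p @ [b])" "a < b" for a b
  proof -
    have "(\<Sum>i<Suc a. m (p @ [i])) \<le> (\<Sum>i<b. m (p @ [i]))"
      using that(3) consistD(2)[OF c] by (intro sum_mono2) auto
    then show False using that(1,2) unfolding Iv_def Lay_snoc by simp
  qed
  show ?thesis using *[OF t] *[OF t(2,1)] by (cases j j' rule: linorder_cases) auto
qed

lemma Iv_prefix_uniq:
  assumes c: "consist N m"
  shows "length p = length q \<Longrightarrow> t \<in> Iv m p \<Longrightarrow> t \<in> Iv m q \<Longrightarrow> p = q"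
proof (induction p arbitrary: q rule: rev_induct)
  case Nil then show ?case by simp
next
  case (snoc a p)
  obtain q' b where q: "q = q' @ [b]" using snoc.prems(1) by (cases q rule: rev_exhaust) auto
  have "t \<in> Iv m p" using snoc.prems(2) Iv_nest[OF c] by auto
  moreover have "t \<in> Iv m q'" using snoc.prems(3) Iv_nest[OF c] q by auto
  ultimately have "p = q'" using snoc.IH snoc.prems(1) q by auto
  then show ?case using Iv_uniq[OF c snoc.prems(2)] snoc.prems(3) q by auto
qed

lemma Iv_take:
  assumes c: "consist N m"
  shows "t \<in> Iv m p \<Longrightarrow> n \<le> length p \<Longrightarrow> t \<in> Iv m (take n p)"
proof (induction p arbitrary: n rule: rev_induct)
  case Nil then show ?case by simp
next
  case (snoc a p)
  show ?case
  proof (cases "n = length (p @ [a])")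
    case True then show ?thesis using snoc.prems by simp
  next
    case False
    then have "n \<le> length p" using snoc.prems(2) by simp
    moreover have "t \<in> Iv m p" using snoc.prems(1) Iv_nest[OF c] by auto
    ultimately show ?thesis using snoc.IH by simp
  qed
qed

lemma Iv_nil: "consist N m \<Longrightarrow> Iv m [] = {0..<1}"
  by (simp add: Iv_def consistD(1))

lemma Iv_sub01:
  assumes c: "consist N m" shows "Iv m p \<subseteq> {0..<1}"
proof
  fix t assume "t \<in> Iv m p"
  then have "t \<in> Iv m (take 0 p)" by (rule Iv_take[OF c]) simp
  then show "t \<in> {0..<1}" by (simp add: Iv_nil[OF c])
qed

lemma Iv_cover:
  assumes c: "consist N m" and t: "0 \<le> t" "t < 1"
  shows "\<exists>p. length p = n \<and> t \<in> Iv m p"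
proof (induction n)
  case 0 then show ?case using Iv_nil[OF c] t by auto
next
  case (Suc n)
  then obtain p where p: "length p = n" "t \<in> Iv m p" by auto
  obtain j where "t \<in> Iv m (p @ [j])" using Iv_split[OF c p(2)] by blast
  then show ?case using \<open>length p = n\<close> by (intro exI[of _ "p @ [j]"]) auto
qed

lemma Iv_pos:
  assumes "t \<in> Iv m p" shows "0 < m p"
proof -
  have "Lay m p \<le> t" "t < Lay m p + m p" using assms unfolding Iv_def by auto
  then show ?thesis by linarith
qed


definition U :: "real measure" where "U = uniform_measure lborel {0..<1}"

lemma U_prob: "prob_space U"
  unfolding U_def by (rule prob_space_uniform_measure) (auto simp: emeasure_lborel_Ico)

lemma sets_U[simp, measurable_cong]: "sets U = sets borel" by (simp add: U_def)
lemma space_U[simp]: "space U = UNIV" by (simp add: U_def)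

lemma measure_U_Iv:
  assumes c: "consist N m"
  shows "measure U (Iv m p) = m p"
proof -
  have sub: "Iv m p \<subseteq> {0..<1}" by (rule Iv_sub01[OF c])
  have "emeasure U (Iv m p) = emeasure lborel ({0..<1} \<inter> Iv m p) / emeasure lborel {0..<1::real}"
    unfolding U_def by (rule emeasure_uniform_measure) (auto simp: Iv_def)
  also have "\<dots> = emeasure lborel (Iv m p)" using sub by (simp add: Int_absorb1 emeasure_lborel_Ico divide_ennreal_def)
  also have "\<dots> = ennreal (m p)" unfolding Iv_def using consistD(2)[OF c, of p]
    by (simp add: emeasure_lborel_Ico)
  finally show ?thesis using consistD(2)[OF c, of p] by (simp add: measure_def)
qed

definition hfun :: "'a::metric_space set \<Rightarrow> nat \<Rightarrow> (nat list \<Rightarrow> real) \<Rightarrow> real \<Rightarrow> 'a" where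
  "hfun S k m t = (if t \<in> {0..<1} then rep S (THE p. length p = k \<and> t \<in> Iv m p) else rep S [])"

lemma hfun_eq:
  assumes c: "consist N m" and p: "length p = k" "t \<in> Iv m p"
  shows "hfun S k m t = rep S p"
proof -
  have t: "t \<in> {0..<1}" using Iv_sub01[OF c, of p] p(2) by blast
  have "(THE p. length p = k \<and> t \<in> Iv m p) = p"
    by (rule the_equality) (use p Iv_prefix_uniq[OF c] in auto)
  then show ?thesis using t by (simp add: hfun_def)
qed

lemma length_Pk: "p \<in> Pk S k \<Longrightarrow> length p = k" by (auto simp: Pk_def)

lemma hfun_char:
  assumes S: "compact S" and w: "w \<in> pdist (Pk S k)" and t: "t \<in> {0..<1}"
  shows "\<exists>p\<in>Pk S k. t \<in> Iv (mass S k w) p \<and> hfun S k (mass S k w) t = rep S p"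
proof -
  have c: "consist (NN S) (mass S k w)" by (rule mass_consist[OF S w])
  obtain p where p: "length p = k" "t \<in> Iv (mass S k w) p" using Iv_cover[OF c] t by auto
  have "0 < mass S k w p" by (rule Iv_pos[OF p(2)])
  then have "p \<in> Pk S k" using mass_top[OF p(1) finite_Pk[OF S]] by (auto split: if_splits)
  then show ?thesis using p hfun_eq[OF c p] by auto
qed

lemma hfun_in:
  assumes S: "compact S" "S \<noteq> {}" and w: "w \<in> pdist (Pk S k)"
  shows "hfun S k (mass S k w) t \<in> S"
proof (cases "t \<in> {0..<1}")
  case True
  then show ?thesis using hfun_char[OF S(1) w True] rep(1) by auto
next
  case False
  have "hfun S k (mass S k w) t = rep S []" using False unfolding hfun_def by (rule if_not_P)
  then show ?thesis using rep_nil[OF S(2)] by simp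
qed

lemma hfun_meas:
  assumes S: "compact S" and w: "w \<in> pdist (Pk S k)"
  shows "hfun S k (mass S k w) \<in> borel_measurable borel"
proof (rule borel_measurableI)
  fix B :: "'a set" assume "open B"
  let ?m = "mass S k w"
  have c: "consist (NN S) ?m" by (rule mass_consist[OF S w])
  have eq: "hfun S k ?m -` B \<inter> space borel =
     (\<Union>p\<in>{p\<in>Pk S k. rep S p \<in> B}. Iv ?m p) \<union> (if rep S [] \<in> B then - {0..<1} else {})"
  proof (intro set_eqI iffI)
    fix t assume t: "t \<in> hfun S k ?m -` B \<inter> space borel"
    show "t \<in> (\<Union>p\<in>{p\<in>Pk S k. rep S p \<in> B}. Iv ?m p) \<union> (if rep S [] \<in> B then - {0..<1} else {})"
    proof (cases "t \<in> {0..<1}")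
      case True
      then obtain p where "p \<in> Pk S k" "t \<in> Iv ?m p" "hfun S k ?m t = rep S p"
        using hfun_char[OF S w] by blast
      then show ?thesis using t by auto
    next
      case False
      have h: "hfun S k ?m t = rep S []" using False unfolding hfun_def by (rule if_not_P)
      then have "rep S [] \<in> B" using t by simp
      then show ?thesis using False by auto
    qed
  next
    fix t assume t: "t \<in> (\<Union>p\<in>{p\<in>Pk S k. rep S p \<in> B}. Iv ?m p) \<union> (if rep S [] \<in> B then - {0..<1} else {})"
    show "t \<in> hfun S k ?m -` B \<inter> space borel"
    proof (cases "t \<in> {0..<1}")
      case True
      then obtain p where p: "p \<in> Pk S k" "rep S p \<in> B" "t \<in> Iv ?m p"
        using t by (auto split: if_splits)
      have "hfun S k ?m t = rep S p" by (rule hfun_eq[OF c length_Pk[OF p(1)] p(3)])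
      then show ?thesis using p by simp
    next
      case False
      have h: "hfun S k ?m t = rep S []" using False unfolding hfun_def by (rule if_not_P)
      have "t \<notin> Iv ?m p" for p using False Iv_sub01[OF c, of p] by blast
      then have "rep S [] \<in> B" using t False by (auto split: if_splits)
      then show ?thesis using h by simp
    qed
  qed
  have "(\<Union>p\<in>{p\<in>Pk S k. rep S p \<in> B}. Iv ?m p) \<in> sets borel"
  proof (rule sets.finite_UN)
    show "finite {p \<in> Pk S k. rep S p \<in> B}" using finite_Pk[OF S] by simp
    show "Iv ?m p \<in> sets borel" for p by (simp add: Iv_def)
  qed
  moreover have "(if rep S [] \<in> B then - {0..<1} else {}) \<in> sets (borel :: real measure)"
    by (cases "rep S [] \<in> B") (auto intro: borel_comp)
  ultimately show "hfun S k ?m -` B \<inter> space borel \<in> sets borel" unfolding eq by auto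
qed

lemma hfun_integral:
  fixes F :: "'a::metric_space \<Rightarrow> real"
  assumes S: "compact S" and w: "w \<in> pdist (Pk S k)" and F: "F \<in> borel_measurable borel"
  shows "(\<integral>t. F (hfun S k (mass S k w) t) \<partial>U) = (\<Sum>p\<in>Pk S k. w p * F (rep S p))"
proof -
  let ?m = "mass S k w"
  have c: "consist (NN S) ?m" by (rule mass_consist[OF S w])
  have fin: "finite (Pk S k)" by (rule finite_Pk[OF S])
  have ae: "AE t in U. F (hfun S k ?m t) = (\<Sum>p\<in>Pk S k. F (rep S p) * indicator (Iv ?m p) t)"
    unfolding U_def
  proof (rule AE_uniform_measureI)
    show "{0..<1::real} \<in> sets lborel" by simp
    show "AE t in lborel. t \<in> {0..<1} \<longrightarrow> F (hfun S k ?m t) = (\<Sum>p\<in>Pk S k. F (rep S p) * indicator (Iv ?m p) t)"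
    proof (intro AE_I2 impI)
      fix t :: real assume t: "t \<in> {0..<1}"
      obtain p where p: "p \<in> Pk S k" "t \<in> Iv ?m p" "hfun S k ?m t = rep S p"
        using hfun_char[OF S w t] by blast
      have "(\<Sum>p'\<in>Pk S k. F (rep S p') * indicator (Iv ?m p') t) = (\<Sum>p'\<in>Pk S k. if p' = p then F (rep S p) else 0)"
      proof (rule sum.cong[OF refl])
        fix p' assume p': "p' \<in> Pk S k"
        show "F (rep S p') * indicator (Iv ?m p') t = (if p' = p then F (rep S p) else 0)"
        proof (cases "p' = p")
          case True then show ?thesis using p(2) by (simp add: indicator_def)
        next
          case False
          then have "t \<notin> Iv ?m p'"
            using Iv_prefix_uniq[OF c, of p' p t] length_Pk[OF p'] length_Pk[OF p(1)] p(2) by metis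
          then show ?thesis using False by (simp add: indicator_def)
        qed
      qed
      also have "\<dots> = F (rep S p)" using p(1) fin by (simp add: sum.delta)
      finally show "F (hfun S k ?m t) = (\<Sum>p\<in>Pk S k. F (rep S p) * indicator (Iv ?m p) t)"
        using p(3) by simp
    qed
  qed
  have meas: "(\<lambda>t. F (hfun S k ?m t)) \<in> borel_measurable U"
    unfolding measurable_cong_sets[OF sets_U refl]
    using measurable_comp[OF hfun_meas[OF S w] F] by (simp add: comp_def)
  have ivs: "Iv ?m p \<in> sets U" for p by (simp add: Iv_def)
  have fm: "emeasure U (Iv ?m p) < \<infinity>" for p
    using finite_measure.emeasure_finite[OF prob_space.finite_measure[OF U_prob], of "Iv ?m p"]
    by (simp add: less_top)
  have "(\<integral>t. F (hfun S k ?m t) \<partial>U) = (\<integral>t. (\<Sum>p\<in>Pk S k. F (rep S p) * indicator (Iv ?m p) t) \<partial>U)"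
  proof (rule integral_cong_AE[OF meas _ ae])
    show "(\<lambda>t. \<Sum>p\<in>Pk S k. F (rep S p) * indicator (Iv ?m p) t) \<in> borel_measurable U"
      by (intro borel_measurable_sum borel_measurable_times borel_measurable_const borel_measurable_indicator ivs)
  qed
  also have "\<dots> = (\<Sum>p\<in>Pk S k. (\<integral>t. F (rep S p) * indicator (Iv ?m p) t \<partial>U))"
    by (rule Bochner_Integration.integral_sum) (intro integrable_mult_right integrable_real_indicator ivs fm)
  also have "\<dots> = (\<Sum>p\<in>Pk S k. F (rep S p) * ?m p)"
    by (intro sum.cong refl) (simp add: measure_U_Iv[OF c])
  also have "\<dots> = (\<Sum>p\<in>Pk S k. w p * F (rep S p))"
  proof (rule sum.cong[OF refl])
    fix p assume p: "p \<in> Pk S k"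
    show "F (rep S p) * ?m p = w p * F (rep S p)" using mass_top[OF length_Pk[OF p] fin] p by simp
  qed
  finally show ?thesis .
qed


lemma limit_construction:
  fixes S :: "'a::complete_space set"
  assumes S: "compact S" "S \<noteq> {}" and w: "\<And>k. w k \<in> pdist (Pk S (lev k))"
    and lev: "\<And>k. k \<le> lev k"
  obtains \<sigma> g where "strict_mono \<sigma>" "g \<in> borel_measurable borel" "\<And>t. g t \<in> S"
    "AE t in U. (\<lambda>k. hfun S (lev (\<sigma> k)) (mass S (lev (\<sigma> k)) (w (\<sigma> k))) t) \<longlonglongrightarrow> g t"
proof -
  define m where "m k = mass S (lev k) (w k)" for k
  have cm: "consist (NN S) (m k)" for k unfolding m_def by (rule mass_consist[OF S(1) w])
  have mbox: "\<forall>k. m k \<in> Pi\<^sub>E UNIV (\<lambda>i::nat list. if i \<in> UNIV then {0..1::real} else {0})"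
    using consistD(2)[OF cm] mass_le1[OF w] by (auto simp: m_def)
  obtain ml \<sigma> where ml: "strict_mono \<sigma>" "(m \<circ> \<sigma>) \<longlonglongrightarrow> ml"
    using seq_compactE[OF compact_imp_seq_compact[OF compact_box01[of UNIV]] mbox] by blast
  have mconv: "(\<lambda>k. m (\<sigma> k) p) \<longlonglongrightarrow> ml p" for p
  proof -
    have c: "continuous_on UNIV (\<lambda>x::nat list \<Rightarrow> real. x p)"
      by (rule continuous_on_product_coordinates)
    have "isCont (\<lambda>x::nat list \<Rightarrow> real. x p) ml"
      using c unfolding continuous_on_eq_continuous_at[OF open_UNIV] by (rule bspec) simp
    from isCont_tendsto_compose[OF this ml(2)] show ?thesis by (simp add: o_def)
  qed
  have cml: "consist (NN S) ml"
    unfolding consist_def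
  proof (intro conjI allI impI)
    have "(\<lambda>k. m (\<sigma> k) []) = (\<lambda>k. 1)" using consistD(1)[OF cm] by simp
    then have "(\<lambda>k. m (\<sigma> k) []) \<longlonglongrightarrow> 1" by (simp only: tendsto_const)
    then show "ml [] = 1" by (rule LIMSEQ_unique[OF mconv[of "[]"]])
    show "0 \<le> ml p" for p
      by (rule LIMSEQ_le_const[OF mconv]) (use consistD(2)[OF cm] in auto)
    show "ml p = (\<Sum>j<NN S (length p). ml (p @ [j]))" for p
    proof -
      have A: "(\<lambda>k. \<Sum>j<NN S (length p). m (\<sigma> k) (p @ [j])) \<longlonglongrightarrow> (\<Sum>j<NN S (length p). ml (p @ [j]))"
        by (intro tendsto_sum mconv)
      have B: "(\<lambda>k. \<Sum>j<NN S (length p). m (\<sigma> k) (p @ [j])) = (\<lambda>k. m (\<sigma> k) p)"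
        by (rule ext) (rule consistD(3)[OF cm, symmetric])
      from A have "(\<lambda>k. m (\<sigma> k) p) \<longlonglongrightarrow> (\<Sum>j<NN S (length p). ml (p @ [j]))" unfolding B .
      then show ?thesis by (rule LIMSEQ_unique[OF mconv[of p]])
    qed
    show "ml (p @ [j]) = 0" if "NN S (length p) \<le> j" for p j
    proof -
      have Z: "(\<lambda>k. m (\<sigma> k) (p @ [j])) = (\<lambda>k. 0)" using consistD(4)[OF cm that] by simp
      have "(\<lambda>k. m (\<sigma> k) (p @ [j])) \<longlonglongrightarrow> 0" unfolding Z by (rule tendsto_const)
      then show ?thesis by (rule LIMSEQ_unique[OF mconv[of "p @ [j]"]])
    qed
  qed
  have layconv: "(\<lambda>k. Lay (m (\<sigma> k)) p) \<longlonglongrightarrow> Lay ml p" for p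
    unfolding Lay_def by (rule tendsto_sum, rule tendsto_sum, rule mconv)
  define E where "E = range (Lay ml) \<union> range (\<lambda>p. Lay ml p + ml p)"
  have cE: "countable E" unfolding E_def by (intro countable_Un countable_image) simp_all
  define G where "G = {0..<1::real} - E"
  have Gsets: "G \<in> sets borel"
  proof -
    have "E \<in> sets borel" by (rule sets.countable[OF _ cE]) simp
    then show ?thesis unfolding G_def by (intro sets.Diff) simp_all
  qed
  define X where "X k = hfun S (lev (\<sigma> k)) (m (\<sigma> k))" for k
  have Xin: "X k t \<in> S" for k t unfolding X_def m_def by (rule hfun_in[OF S w])
  have Xmeas: "X k \<in> borel_measurable borel" for k unfolding X_def m_def by (rule hfun_meas[OF S(1) w])
  have cauchy: "Cauchy (\<lambda>k. X k t)" if t: "t \<in> G" for t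
  proof (rule metric_CauchyI)
    fix e :: real assume e: "0 < e"
    obtain n where n: "(1/2::real) ^ n < e / 2" using real_arch_pow_inv[of "e/2" "1/2::real"] e by auto
    have t01: "0 \<le> t" "t < 1" and tE: "t \<notin> E" using t by (auto simp: G_def)
    obtain p where p: "length p = Suc n" "t \<in> Iv ml p" using Iv_cover[OF cml t01] by blast
    have lo: "Lay ml p < t"
    proof -
      have "Lay ml p \<le> t" using p(2) by (simp add: Iv_def)
      moreover have "Lay ml p \<noteq> t" using tE by (auto simp: E_def)
      ultimately show ?thesis by simp
    qed
    have up: "t < Lay ml p + ml p" using p(2) by (simp add: Iv_def)
    have ev1: "eventually (\<lambda>k. Lay (m (\<sigma> k)) p < t) sequentially"
      by (rule order_tendstoD(2)[OF layconv lo])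
    have ev2: "eventually (\<lambda>k. t < Lay (m (\<sigma> k)) p + m (\<sigma> k) p) sequentially"
      by (rule order_tendstoD(1)[OF tendsto_add[OF layconv mconv] up])
    obtain K where K: "\<And>k. k \<ge> K \<Longrightarrow> t \<in> Iv (m (\<sigma> k)) p"
      using eventually_conj[OF ev1 ev2] unfolding eventually_sequentially Iv_def by force
    have claim: "code S (X k t) (Suc n) = p" if k: "k \<ge> max K (Suc n)" for k
    proof -
      have tin: "t \<in> Iv (m (\<sigma> k)) p" using K k by simp
      have sk: "Suc n \<le> lev (\<sigma> k)" using seq_suble[OF ml(1), of k] lev[of "\<sigma> k"] k by simp
      obtain q where q: "length q = lev (\<sigma> k)" "t \<in> Iv (m (\<sigma> k)) q"
        using Iv_cover[OF cm t01] by blast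
      have hq: "X k t = rep S q" unfolding X_def by (rule hfun_eq[OF cm q])
      have "0 < m (\<sigma> k) q" by (rule Iv_pos[OF q(2)])
      then have qP: "q \<in> Pk S (lev (\<sigma> k))"
        using mass_top[OF q(1) finite_Pk[OF S(1)]] by (auto simp: m_def split: if_splits)
      have cq: "code S (rep S q) (lev (\<sigma> k)) = q" by (rule rep(2)[OF qP])
      have "t \<in> Iv (m (\<sigma> k)) (take (Suc n) q)" by (rule Iv_take[OF cm q(2)]) (use sk q(1) in simp)
      then have "take (Suc n) q = p"
        using Iv_prefix_uniq[OF cm _ _ tin] p(1) q(1) sk by simp
      then show ?thesis using hq cq take_code[OF sk, of S "rep S q"] by simp
    qed
    show "\<exists>M. \<forall>k\<ge>M. \<forall>k'\<ge>M. dist (X k t) (X k' t) < e"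
    proof (intro exI allI impI)
      fix k k' assume "k \<ge> max K (Suc n)" "k' \<ge> max K (Suc n)"
      then have "code S (X k t) (Suc n) = code S (X k' t) (Suc n)" using claim by simp
      then have "dist (X k t) (X k' t) < 2 * rr n" by (rule code_dist[OF S(1) Xin Xin])
      also have "\<dots> < e" using n by (simp add: rr_def)
      finally show "dist (X k t) (X k' t) < e" .
    qed
  qed
  define g where "g t = (if t \<in> G then lim (\<lambda>k. X k t) else rep S [])" for t
  have gconv: "(\<lambda>k. X k t) \<longlonglongrightarrow> g t" if "t \<in> G" for t
  proof -
    have "convergent (\<lambda>k. X k t)" by (rule Cauchy_convergent[OF cauchy[OF that]])
    then have "(\<lambda>k. X k t) \<longlonglongrightarrow> lim (\<lambda>k. X k t)" by (rule convergent_LIMSEQ_iff[THEN iffD1])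
    then show ?thesis using that by (simp add: g_def)
  qed
  have gmeas: "g \<in> borel_measurable borel"
  proof (rule borel_measurable_LIMSEQ_metric[where f="\<lambda>i t. if t \<in> G then X i t else rep S []"])
    show "(\<lambda>t. if t \<in> G then X i t else rep S []) \<in> borel_measurable borel" for i
    proof (rule measurable_If_set[OF Xmeas measurable_const])
      show "G \<inter> space borel \<in> sets borel" using Gsets by simp
      show "rep S [] \<in> space borel" by simp
    qed
    show "(\<lambda>i. if t \<in> G then X i t else rep S []) \<longlonglongrightarrow> g t" for t
    proof (cases "t \<in> G")
      case True then show ?thesis using gconv[OF True] by simp
    next
      case False then show ?thesis by (simp add: g_def)
    qed
  qed
  have gin: "g t \<in> S" for t
  proof (cases "t \<in> G")
    case True
    show ?thesis by (rule closed_sequentially[OF compact_imp_closed[OF S(1)] _ gconv[OF True]]) (rule Xin)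
  next
    case False then show ?thesis using rep_nil[OF S(2)] by (simp add: g_def)
  qed
  have ae: "AE t in U. t \<in> G"
    unfolding U_def
  proof (rule AE_uniform_measureI)
    show "{0..<1::real} \<in> sets lborel" by simp
    have "AE t in lborel. t \<notin> E" by (rule AE_not_in[OF countable_imp_null_set_lborel[OF cE]])
    then show "AE t in lborel. t \<in> {0..<1} \<longrightarrow> t \<in> G" by eventually_elim (auto simp: G_def)
  qed
  have "AE t in U. (\<lambda>k. hfun S (lev (\<sigma> k)) (mass S (lev (\<sigma> k)) (w (\<sigma> k))) t) \<longlonglongrightarrow> g t"
    using ae
  proof eventually_elim
    case (elim t)
    show ?case using gconv[OF elim] by (simp add: X_def m_def)
  qed
  then show ?thesis by (rule that[OF ml(1) gmeas gin])
qed


lemma PX_props: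
  assumes "\<mu> \<in> PX S"
  shows "prob_space \<mu>" "sets \<mu> = sets borel" "space \<mu> = UNIV"
  using assms by (auto simp: PX_def PM_def dest: sets_eq_imp_space_eq)

lemma PM_props:
  assumes "\<mu> \<in> PM"
  shows "prob_space \<mu>" "sets \<mu> = sets borel" "space \<mu> = UNIV"
  using assms by (auto simp: PM_def dest: sets_eq_imp_space_eq)

lemma PX_PM: "\<mu> \<in> PX S \<Longrightarrow> \<mu> \<in> PM" by (simp add: PX_def)

lemma PX_AE:
  assumes "\<mu> \<in> PX S" "closed S"
  shows "AE x in \<mu>. x \<in> S"
proof -
  have p: "prob_space \<mu>" and s: "sets \<mu> = sets borel" using PX_props[OF assms(1)] by auto
  have S: "S \<in> sets \<mu>" using s assms(2) by simp
  have "emeasure \<mu> S = 1" using assms(1) by (simp add: PX_def)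
  then have "measure \<mu> S = 1" by (simp add: Sigma_Algebra.measure_def)
  then show ?thesis using prob_space.AE_in_set_eq_1[OF p S] by simp
qed

lemma meas_cont:
  assumes "sets \<mu> = sets borel" "continuous_on UNIV f"
  shows "f \<in> borel_measurable \<mu>"
  unfolding measurable_cong_sets[OF assms(1) refl] by (rule borel_measurable_continuous_onI[OF assms(2)])

lemma cont_d2: "continuous_on UNIV (\<lambda>x::'a::metric_space. (dist x y)^2)"
  by (intro continuous_intros)

lemma cont_d2': "continuous_on UNIV (\<lambda>y::'a::metric_space. (dist x y)^2)"
  by (intro continuous_intros)

lemma integrable_d2:
  assumes mu: "\<mu> \<in> PX S" and S: "compact S"
  shows "integrable \<mu> (\<lambda>x. (dist x y)^2)"
proof -
  obtain B where B: "\<forall>x\<in>S. dist y x \<le> B" using compact_imp_bounded[OF S] bounded_any_center[of S y] by auto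
  have p: "prob_space \<mu>" and s: "sets \<mu> = sets borel" using PX_props[OF mu] by auto
  have "AE x in \<mu>. norm ((dist x y)^2) \<le> B^2"
    using PX_AE[OF mu compact_imp_closed[OF S]]
  proof eventually_elim
    case (elim x)
    then have "dist x y \<le> B" using B by (simp add: dist_commute)
    then show ?case by (simp add: power_mono)
  qed
  then show ?thesis
    by (rule finite_measure.integrable_const_bound[OF prob_space.finite_measure[OF p]])
       (rule meas_cont[OF s cont_d2])
qed

lemma integrable_d2':
  assumes mu: "\<mu> \<in> PX S" and S: "compact S"
  shows "integrable \<mu> (\<lambda>y. (dist x y)^2)"
  using integrable_d2[OF mu S, of x] by (simp add: dist_commute)

lemma integral_d2_le:
  assumes mu: "\<mu> \<in> PX S" and S: "compact S" and B: "\<forall>x\<in>S. dist x y \<le> B"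
  shows "(\<integral>x. (dist x y)^2 \<partial>\<mu>) \<le> B^2"
proof -
  have p: "prob_space \<mu>" using PX_props[OF mu] by auto
  have "(\<integral>x. (dist x y)^2 \<partial>\<mu>) \<le> (\<integral>x. B^2 \<partial>\<mu>)"
  proof (rule integral_mono_AE[OF integrable_d2[OF mu S]])
    show "integrable \<mu> (\<lambda>x. B^2)" by (rule finite_measure.integrable_const[OF prob_space.finite_measure[OF p]])
    show "AE x in \<mu>. (dist x y)^2 \<le> B^2"
      using PX_AE[OF mu compact_imp_closed[OF S]] by eventually_elim (use B in \<open>auto intro: power_mono\<close>)
  qed
  also have "\<dots> = B^2" using prob_space.prob_space[OF p] by simp
  finally show ?thesis .
qed

lemma W2sq_eq:
  assumes "\<nu> \<in> PX S" "compact S"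
  shows "W2sq x \<nu> = ennreal (\<integral>y. (dist x y)^2 \<partial>\<nu>)"
  unfolding W2sq_def by (rule nn_integral_eq_integral[OF integrable_d2'[OF assms]]) simp

lemma Var_le:
  assumes "\<mu> \<in> PX S" "compact S"
  shows "Var \<mu> \<le> (\<integral>x. (dist x y)^2 \<partial>\<mu>)"
  unfolding Var_def
proof (rule cINF_lower)
  show "bdd_below (range (\<lambda>y. \<integral>x. (dist x y)^2 \<partial>\<mu>))"
    by (rule bdd_belowI[of _ 0]) (auto intro: integral_nonneg)
qed simp

lemma Var_nonneg: "0 \<le> Var \<mu>"
  unfolding Var_def by (rule cINF_greatest) (auto intro: integral_nonneg)

lemma W2_sq: "(W2 x \<nu>)^2 = W2sq x \<nu>"
proof (cases "W2sq x \<nu> = \<infinity>")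
  case True then show ?thesis by (simp add: W2_def power2_eq_square)
next
  case False
  have "(W2 x \<nu>)^2 = ennreal ((sqrt (enn2real (W2sq x \<nu>)))^2)"
    using False by (simp add: W2_def ennreal_power)
  also have "\<dots> = ennreal (enn2real (W2sq x \<nu>))" by simp
  also have "\<dots> = W2sq x \<nu>" using False by (simp add: less_top)
  finally show ?thesis .
qed

lemma W2_of_fin: "W2sq x \<nu> = ennreal a \<Longrightarrow> 0 \<le> a \<Longrightarrow> W2 x \<nu> = ennreal (sqrt a)"
  by (simp add: W2_def)

lemma dist_pair_meas:
  fixes X :: "'a::metric_space set"
  assumes X: "compact X"
  shows "(\<lambda>z::'a\<times>'a. indicator X (fst z) * ennreal ((dist (fst z) (snd z))^2)) \<in> borel_measurable (borel \<Otimes>\<^sub>M borel)"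
proof -
  define D where "D = (\<Union>n. set (net X n))"
  have cD: "countable D" unfolding D_def by (intro countable_UN) (auto intro: countable_finite)
  have approx: "\<exists>d\<in>D. dist x d < rr n" if xX: "x \<in> X" for x n
  proof -
    obtain d where "d \<in> set (net X n)" "x \<in> ball d (rr n)" using net(2)[OF X, of n] xX by blast
    then show ?thesis by (auto simp: D_def dist_commute)
  qed
  have Dne: "D \<noteq> {}" if "x \<in> X" for x using approx[OF that, of 0] by auto
  define F where "F z = (INF d\<in>D. ennreal (dist (fst z) d + dist d (snd z)))" for z :: "'a \<times> 'a"
  have Feq: "F (x, y) = ennreal (dist x y)" if x: "x \<in> X" for x y
  proof (rule antisym)
    show "ennreal (dist x y) \<le> F (x, y)" unfolding F_def
      by (rule INF_greatest) (unfold fst_conv snd_conv, rule ennreal_leI, rule dist_triangle)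
    show "F (x, y) \<le> ennreal (dist x y)"
    proof (rule ennreal_le_epsilon)
      fix e :: real assume e: "0 < e"
      obtain n where n: "(1/2::real) ^ n < e / 2" using real_arch_pow_inv[of "e/2" "1/2::real"] e by auto
      obtain d where d: "d \<in> D" "dist x d < rr n" using approx[OF x] by blast
      have "F (x, y) \<le> ennreal (dist x d + dist d y)" unfolding F_def fst_conv snd_conv using d(1) by (rule INF_lower)
      also have "\<dots> \<le> ennreal (dist x y + e)"
      proof (rule ennreal_leI)
        have "dist d y \<le> dist d x + dist x y" by (rule dist_triangle)
        then show "dist x d + dist d y \<le> dist x y + e" using d(2) n by (simp add: rr_def dist_commute)
      qed
      also have "\<dots> = ennreal (dist x y) + ennreal e" using e by (simp add: ennreal_plus)
      finally show "F (x, y) \<le> ennreal (dist x y) + ennreal e" .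
    qed
  qed
  have Fmeas: "F \<in> borel_measurable (borel \<Otimes>\<^sub>M borel)" unfolding F_def
  proof (rule borel_measurable_INF[OF cD])
    fix d assume "d \<in> D"
    have c1: "(\<lambda>x::'a. dist x d) \<in> borel_measurable borel"
      by (intro borel_measurable_continuous_onI continuous_intros)
    have c2: "(\<lambda>y::'a. dist d y) \<in> borel_measurable borel"
      by (intro borel_measurable_continuous_onI continuous_intros)
    have m1: "(\<lambda>z::'a\<times>'a. dist (fst z) d) \<in> borel_measurable (borel \<Otimes>\<^sub>M borel)"
      by (rule measurable_compose[OF measurable_fst c1])
    have m2: "(\<lambda>z::'a\<times>'a. dist d (snd z)) \<in> borel_measurable (borel \<Otimes>\<^sub>M borel)"
      by (rule measurable_compose[OF measurable_snd c2])
    have "(\<lambda>z::'a\<times>'a. dist (fst z) d + dist d (snd z)) \<in> borel_measurable (borel \<Otimes>\<^sub>M borel)"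
      by (rule borel_measurable_add[OF m1 m2])
    then show "(\<lambda>z. ennreal (dist (fst z) d + dist d (snd z))) \<in> borel_measurable (borel \<Otimes>\<^sub>M borel)"
      using measurable_compose[OF _ measurable_ennreal] by blast
  qed
  have Xs: "X \<in> sets borel" using compact_imp_closed[OF X] by simp
  have im: "(\<lambda>z::'a\<times>'a. indicator X (fst z) :: ennreal) \<in> borel_measurable (borel \<Otimes>\<^sub>M borel)"
    by (rule measurable_compose[OF measurable_fst borel_measurable_indicator[OF Xs]])
  have "(\<lambda>z. indicator X (fst z) * F z * F z) \<in> borel_measurable (borel \<Otimes>\<^sub>M borel)"
    by (intro borel_measurable_times_ennreal im Fmeas)
  moreover have "(\<lambda>z. indicator X (fst z) * F z * F z) = (\<lambda>z::'a\<times>'a. indicator X (fst z) * ennreal ((dist (fst z) (snd z))^2))"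
  proof (rule ext)
    fix z :: "'a \<times> 'a"
    obtain x y where z: "z = (x, y)" by (cases z)
    show "indicator X (fst z) * F z * F z = indicator X (fst z) * ennreal ((dist (fst z) (snd z))^2)"
      using Feq[of x y] by (cases "x \<in> X") (simp_all add: z indicator_def ennreal_mult power2_eq_square)
  qed
  ultimately show ?thesis by simp
qed

lemma Var_le_W2int:
  assumes mu: "\<mu> \<in> PX X" and X: "compact X" and nu: "\<nu> \<in> PM"
  shows "ennreal (Var \<mu>) \<le> (\<integral>\<^sup>+x. W2sq x \<nu> \<partial>\<mu>)"
proof -
  have pm: "prob_space \<mu>" "sets \<mu> = sets borel" using PX_props[OF mu] by auto
  have pn: "prob_space \<nu>" "sets \<nu> = sets borel" using PM_props[OF nu] by auto
  interpret PS: pair_sigma_finite \<mu> \<nu>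
    by (intro pair_sigma_finite.intro prob_space_imp_sigma_finite pm(1) pn(1))
  define f where "f z = indicator X (fst z) * ennreal ((dist (fst z) (snd z))^2)" for z :: "'a \<times> 'a"
  have fm: "f \<in> borel_measurable (\<mu> \<Otimes>\<^sub>M \<nu>)"
    unfolding measurable_cong_sets[OF sets_pair_measure_cong[OF pm(2) pn(2)] refl] f_def
    by (rule dist_pair_meas[OF X])
  have aeX: "AE x in \<mu>. x \<in> X" by (rule PX_AE[OF mu compact_imp_closed[OF X]])
  have inner: "ennreal (Var \<mu>) \<le> (\<integral>\<^sup>+x. f (x, y) \<partial>\<mu>)" for y
  proof -
    have "(\<integral>\<^sup>+x. f (x, y) \<partial>\<mu>) = (\<integral>\<^sup>+x. ennreal ((dist x y)^2) \<partial>\<mu>)"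
      by (rule nn_integral_cong_AE) (use aeX in \<open>eventually_elim, simp add: f_def\<close>)
    also have "\<dots> = ennreal (\<integral>x. (dist x y)^2 \<partial>\<mu>)"
      by (rule nn_integral_eq_integral[OF integrable_d2[OF mu X]]) simp
    finally show ?thesis using Var_le[OF mu X, of y] by (simp add: ennreal_leI)
  qed
  have "ennreal (Var \<mu>) = (\<integral>\<^sup>+y. ennreal (Var \<mu>) \<partial>\<nu>)"
    using prob_space.emeasure_space_1[OF pn(1)] by simp
  also have "\<dots> \<le> (\<integral>\<^sup>+y. (\<integral>\<^sup>+x. f (x, y) \<partial>\<mu>) \<partial>\<nu>)"
    by (rule nn_integral_mono) (rule inner)
  also have "\<dots> = (\<integral>\<^sup>+x. (\<integral>\<^sup>+y. f (x, y) \<partial>\<nu>) \<partial>\<mu>)" by (rule PS.Fubini[OF fm])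
  also have "\<dots> = (\<integral>\<^sup>+x. W2sq x \<nu> \<partial>\<mu>)"
    by (rule nn_integral_cong_AE) (use aeX in \<open>eventually_elim, simp add: f_def W2sq_def\<close>)
  finally show ?thesis .
qed

lemma W2int_le_sup:
  assumes mu: "\<mu> \<in> PX X" and X: "closed X"
  shows "(\<integral>\<^sup>+x. W2sq x \<nu> \<partial>\<mu>) \<le> (SUP x\<in>X. W2sq x \<nu>)"
proof -
  have pm: "prob_space \<mu>" using PX_props[OF mu] by auto
  have "(\<integral>\<^sup>+x. W2sq x \<nu> \<partial>\<mu>) \<le> (\<integral>\<^sup>+x. (SUP x\<in>X. W2sq x \<nu>) \<partial>\<mu>)"
    by (rule nn_integral_mono_AE) (use PX_AE[OF mu X] in \<open>eventually_elim, auto intro: SUP_upper\<close>)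
  also have "\<dots> = (SUP x\<in>X. W2sq x \<nu>)" using prob_space.emeasure_space_1[OF pm] by simp
  finally show ?thesis .
qed


lemma rep_code_conv:
  assumes S: "compact S" and y: "y \<in> S" and tau: "\<And>k. k \<le> \<tau> k"
  shows "(\<lambda>k. rep S (code S y (\<tau> k))) \<longlonglongrightarrow> y"
proof (rule metric_LIMSEQ_I)
  fix e :: real assume e: "0 < e"
  obtain n where n: "(1/2::real) ^ n < e / 2" using real_arch_pow_inv[of "e/2" "1/2::real"] e by auto
  show "\<exists>N. \<forall>k\<ge>N. dist (rep S (code S y (\<tau> k))) y < e"
  proof (intro exI allI impI)
    fix k assume k: "Suc n \<le> k"
    have P: "code S y (\<tau> k) \<in> Pk S (\<tau> k)" using y by (auto simp: Pk_def)
    have r1: "rep S (code S y (\<tau> k)) \<in> S" by (rule rep(1)[OF P])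
    have r2: "code S (rep S (code S y (\<tau> k))) (\<tau> k) = code S y (\<tau> k)" by (rule rep(2)[OF P])
    have le: "Suc n \<le> \<tau> k" using tau[of k] k by simp
    have "take (Suc n) (code S (rep S (code S y (\<tau> k))) (\<tau> k)) = take (Suc n) (code S y (\<tau> k))"
      using r2 by simp
    then have "code S (rep S (code S y (\<tau> k))) (Suc n) = code S y (Suc n)"
      by (simp only: take_code[OF le])
    then have "dist (rep S (code S y (\<tau> k))) y < 2 * rr n" by (rule code_dist[OF S r1 y])
    also have "\<dots> < e" using n by (simp add: rr_def)
    finally show "dist (rep S (code S y (\<tau> k))) y < e" .
  qed
qed

lemma sqrt_lower:
  assumes mu: "\<mu> \<in> PX X" and X: "compact X" and nu: "\<nu> \<in> PM"
  shows "ennreal (sqrt (Var \<mu>)) \<le> (SUP x\<in>X. W2 x \<nu>)"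
proof (rule ccontr)
  define s where "s = (SUP x\<in>X. W2 x \<nu>)"
  assume "\<not> ennreal (sqrt (Var \<mu>)) \<le> (SUP x\<in>X. W2 x \<nu>)"
  then have lt: "s < ennreal (sqrt (Var \<mu>))" by (simp add: s_def not_le)
  obtain r where r0: "0 \<le> r" and sr: "s = ennreal r"
  proof (cases s rule: ennreal_cases)
    case (real r) then show ?thesis using that by blast
  next
    case top then show ?thesis using lt by simp
  qed
  have rlt: "r < sqrt (Var \<mu>)" using lt sr r0 by (simp add: ennreal_less_iff)
  have "r^2 < (sqrt (Var \<mu>))^2" by (rule power_strict_mono[OF rlt r0]) simp
  then have r2: "r^2 < Var \<mu>" using Var_nonneg[of \<mu>] by simp
  have "W2sq x \<nu> \<le> ennreal (r^2)" if x: "x \<in> X" for x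
  proof -
    have "W2 x \<nu> \<le> s" unfolding s_def using x by (rule SUP_upper)
    then have "(W2 x \<nu>)^2 \<le> (ennreal r)^2" unfolding sr by (rule power_mono) simp
    then show ?thesis by (simp add: W2_sq ennreal_power r0)
  qed
  then have "(SUP x\<in>X. W2sq x \<nu>) \<le> ennreal (r^2)" by (rule SUP_least)
  moreover have "ennreal (Var \<mu>) \<le> (SUP x\<in>X. W2sq x \<nu>)"
    using Var_le_W2int[OF mu X nu] W2int_le_sup[OF mu compact_imp_closed[OF X]] by (rule order_trans)
  ultimately have "ennreal (Var \<mu>) \<le> ennreal (r^2)" by (rule order_trans[rotated])
  then have "Var \<mu> \<le> r^2" by (simp add: ennreal_le_iff)
  with r2 show False by simp
qed

lemma AE_circ:
  assumes mu: "\<mu> \<in> PX X" and X: "compact X" and nu: "\<nu> \<in> PM"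
    and sup: "(SUP x\<in>X. W2 x \<nu>) = ennreal (sqrt (Var \<mu>))"
  shows "AE x in \<mu>. W2 x \<nu> = ennreal (sqrt (Var \<mu>))"
proof -
  define V where "V = Var \<mu>"
  have V0: "0 \<le> V" unfolding V_def by (rule Var_nonneg)
  have pm: "prob_space \<mu>" "sets \<mu> = sets borel" using PX_props[OF mu] by auto
  have pn: "prob_space \<nu>" "sets \<nu> = sets borel" using PM_props[OF nu] by auto
  interpret PS: pair_sigma_finite \<mu> \<nu>
    by (intro pair_sigma_finite.intro prob_space_imp_sigma_finite pm(1) pn(1))
  define f where "f z = indicator X (fst z) * ennreal ((dist (fst z) (snd z))^2)" for z :: "'a \<times> 'a"
  have fm: "f \<in> borel_measurable (\<mu> \<Otimes>\<^sub>M \<nu>)"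
    unfolding measurable_cong_sets[OF sets_pair_measure_cong[OF pm(2) pn(2)] refl] f_def
    by (rule dist_pair_meas[OF X])
  define W where "W x = (\<integral>\<^sup>+y. f (x, y) \<partial>\<nu>)" for x
  have Wm: "W \<in> borel_measurable \<mu>" unfolding W_def
    by (rule sigma_finite_measure.borel_measurable_nn_integral[OF prob_space_imp_sigma_finite[OF pn(1)]])
       (simp add: fm)
  have aeX: "AE x in \<mu>. x \<in> X" by (rule PX_AE[OF mu compact_imp_closed[OF X]])
  have WX: "AE x in \<mu>. W x = W2sq x \<nu>"
    using aeX by eventually_elim (simp add: W_def f_def W2sq_def)
  have Wle: "AE x in \<mu>. W x \<le> ennreal V"
    using aeX WX
  proof eventually_elim
    case (elim x)
    have "W2 x \<nu> \<le> ennreal (sqrt V)" using sup elim(1) unfolding V_def by (metis SUP_upper)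
    then have "(W2 x \<nu>)^2 \<le> (ennreal (sqrt V))^2" by (rule power_mono) simp
    then show ?case using elim(2) V0 by (simp add: W2_sq ennreal_power)
  qed
  have int_ge: "ennreal V \<le> (\<integral>\<^sup>+x. W x \<partial>\<mu>)"
  proof -
    have "(\<integral>\<^sup>+x. W x \<partial>\<mu>) = (\<integral>\<^sup>+x. W2sq x \<nu> \<partial>\<mu>)" by (rule nn_integral_cong_AE[OF WX])
    then show ?thesis using Var_le_W2int[OF mu X nu] by (simp add: V_def)
  qed
  have int_le: "(\<integral>\<^sup>+x. W x \<partial>\<mu>) \<le> ennreal V"
  proof -
    have "(\<integral>\<^sup>+x. W x \<partial>\<mu>) \<le> (\<integral>\<^sup>+x. ennreal V \<partial>\<mu>)" by (rule nn_integral_mono_AE[OF Wle])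
    also have "\<dots> = ennreal V" using prob_space.emeasure_space_1[OF pm(1)] by simp
    finally show ?thesis .
  qed
  have int_eq: "(\<integral>\<^sup>+x. W x \<partial>\<mu>) = ennreal V" using int_ge int_le by (rule antisym[rotated])
  have "(\<integral>\<^sup>+x. (ennreal V - W x) \<partial>\<mu>) = (\<integral>\<^sup>+x. ennreal V \<partial>\<mu>) - (\<integral>\<^sup>+x. W x \<partial>\<mu>)"
    by (rule nn_integral_diff[OF _ Wm _ Wle]) (simp_all add: int_eq)
  also have "\<dots> = 0" using prob_space.emeasure_space_1[OF pm(1)] int_eq by simp
  finally have "AE x in \<mu>. ennreal V - W x = 0"
    by (subst nn_integral_0_iff_AE[symmetric]) (use Wm in simp_all)
  then have "AE x in \<mu>. W x = ennreal V"
    using Wle by eventually_elim (auto dest: ennreal_minus_eq_0 intro: antisym)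
  then show ?thesis using WX
  proof eventually_elim
    case (elim x)
    then have "W2sq x \<nu> = ennreal V" by simp
    then show ?case unfolding V_def by (rule W2_of_fin) (use V0 V_def in simp)
  qed
qed


theorem theorem3p1:
  fixes X :: "'a::complete_space set"
  assumes "compact X" and "X \<noteq> {}"
    and "\<forall>\<mu>\<in>PX X. \<exists>y. barycenter \<mu> y"
    and "compact (conv X)"
  shows "\<exists>\<nu>. circumcenter X \<nu>
      \<and> (\<exists>\<mu>\<in>PX X. (\<forall>\<mu>'\<in>PX X. Var \<mu>' \<le> Var \<mu>) \<and> (circumradius X)\<^sup>2 = ennreal (Var \<mu>))
      \<and> (\<exists>\<nu>'\<in>PX (conv X). (\<forall>\<nu>''\<in>PX (conv X). AVar X \<nu>' \<le> AVar X \<nu>'')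
            \<and> (circumradius X)\<^sup>2 = ennreal (AVar X \<nu>'))
      \<and> (\<forall>\<mu>\<in>PX X. (\<forall>\<mu>'\<in>PX X. Var \<mu>' \<le> Var \<mu>) \<longrightarrow>
            (AE x in \<mu>. W2 x \<nu> = circumradius X)
          \<and> (\<forall>\<nu>'. circumcenter X \<nu>' \<longrightarrow> (AE x in \<mu>. W2 x \<nu>' = circumradius X)))"
proof -
  note X = assms(1) and Xne = assms(2) and bary = assms(3) and Y = assms(4)
  define Y where "Y = conv X"
  have Yc: "compact Y" using Y by (simp add: Y_def)
  have Xcl: "closed X" using compact_imp_closed[OF X] .
  have Ycl: "closed Y" using compact_imp_closed[OF Yc] .
  obtain x0 where x0: "x0 \<in> X" using Xne by auto
  have ret: "return borel x0 \<in> PX X"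
    using x0 Xcl by (auto simp: PX_def PM_def prob_space_return emeasure_return)
  obtain b0 where "barycenter (return borel x0) b0" using bary ret by blast
  then have "b0 \<in> Y" using ret by (auto simp: Y_def conv_def)
  then have Yne: "Y \<noteq> {}" by auto
  obtain D where D: "\<forall>a\<in>X \<union> Y. \<forall>b\<in>X \<union> Y. dist a b \<le> D"
    using compact_imp_bounded[OF compact_Un[OF X Yc]] bounded_two_points by blast
  have D0: "0 \<le> D" using D x0 by (metis UnI1 zero_le_dist order_trans)
  define c where "c p q = (dist (rep X p) (rep Y q))^2" for p q
  define Gm where "Gm k l w v \<longleftrightarrow> w \<in> pdist (Pk X k) \<and> v \<in> pdist (Pk Y k)
      \<and> (\<forall>q\<in>Pk Y k. l \<le> (\<Sum>p\<in>Pk X k. w p * c p q))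
      \<and> (\<forall>p\<in>Pk X k. (\<Sum>q\<in>Pk Y k. v q * c p q) \<le> l)" for k l w v
  have "\<forall>k. \<exists>z. Gm k (fst z) (fst (snd z)) (snd (snd z))"
  proof
    fix k
    obtain l w v where "w \<in> pdist (Pk X k)" "v \<in> pdist (Pk Y k)"
      "\<forall>q\<in>Pk Y k. l \<le> (\<Sum>p\<in>Pk X k. w p * c p q)" "\<forall>p\<in>Pk X k. (\<Sum>q\<in>Pk Y k. v q * c p q) \<le> l"
      using minimax[where c=c, OF finite_Pk[OF X] Pk_ne[OF Xne] finite_Pk[OF Yc] Pk_ne[OF Yne]] by blast
    then show "\<exists>z. Gm k (fst z) (fst (snd z)) (snd (snd z))"
      by (intro exI[of _ "(l, w, v)"]) (simp add: Gm_def)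
  qed
  then obtain Z where Z: "\<And>k. Gm k (fst (Z k)) (fst (snd (Z k))) (snd (snd (Z k)))" by metis
  define l where "l k = fst (Z k)" for k
  define w where "w k = fst (snd (Z k))" for k
  define v where "v k = snd (snd (Z k))" for k
  have w: "w k \<in> pdist (Pk X k)" for k using Z[of k] by (simp add: Gm_def w_def)
  have v: "v k \<in> pdist (Pk Y k)" for k using Z[of k] by (simp add: Gm_def v_def)
  have gameY: "\<And>q. q \<in> Pk Y k \<Longrightarrow> l k \<le> (\<Sum>p\<in>Pk X k. w k p * c p q)" for k
    using Z[of k] by (simp add: Gm_def w_def l_def)
  have gameX: "\<And>p. p \<in> Pk X k \<Longrightarrow> (\<Sum>q\<in>Pk Y k. v k q * c p q) \<le> l k" for k
    using Z[of k] by (simp add: Gm_def v_def l_def)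
  have cb: "0 \<le> c p q \<and> c p q \<le> D^2" if "p \<in> Pk X k" "q \<in> Pk Y k" for p q k
  proof -
    have "rep X p \<in> X" "rep Y q \<in> Y" using rep(1) that by auto
    then have "dist (rep X p) (rep Y q) \<le> D" using D by auto
    then show ?thesis by (simp add: c_def power_mono)
  qed
  have lb: "l k \<in> {0..D^2}" for k
  proof -
    obtain p where p: "p \<in> Pk X k" using Pk_ne[OF Xne] by auto
    obtain q where q: "q \<in> Pk Y k" using Pk_ne[OF Yne] by auto
    have "0 \<le> (\<Sum>q\<in>Pk Y k. v k q * c p q)"
      using v[of k] cb[OF p] by (intro sum_nonneg) (auto simp: pdist_def)
    also have "\<dots> \<le> l k" by (rule gameX[OF p])
    finally have l0: "0 \<le> l k" .
    have "l k \<le> (\<Sum>p\<in>Pk X k. w k p * c p q)" by (rule gameY[OF q])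
    also have "\<dots> \<le> (\<Sum>p\<in>Pk X k. w k p * D^2)"
      using w[of k] cb[OF _ q] by (intro sum_mono mult_left_mono) (auto simp: pdist_def)
    also have "\<dots> = D^2" using w[of k] by (simp add: pdist_def sum_distrib_right[symmetric])
    finally show ?thesis using l0 by simp
  qed
  obtain \<sigma>1 gX where s1: "strict_mono \<sigma>1" and gXm: "gX \<in> borel_measurable borel"
    and gXin: "\<And>t. gX t \<in> X"
    and gXc: "AE t in U. (\<lambda>k. hfun X (\<sigma>1 k) (mass X (\<sigma>1 k) (w (\<sigma>1 k))) t) \<longlonglongrightarrow> gX t"
    using limit_construction[OF X Xne, of w "\<lambda>k. k"] w by auto
  obtain \<sigma>2 gY where s2: "strict_mono \<sigma>2" and gYm: "gY \<in> borel_measurable borel"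
    and gYin: "\<And>t. gY t \<in> Y"
    and gYc: "AE t in U. (\<lambda>k. hfun Y (\<sigma>1 (\<sigma>2 k)) (mass Y (\<sigma>1 (\<sigma>2 k)) (v (\<sigma>1 (\<sigma>2 k)))) t) \<longlonglongrightarrow> gY t"
    using limit_construction[OF Yc Yne, of "\<lambda>k. v (\<sigma>1 k)" \<sigma>1] v seq_suble[OF s1] by auto
  obtain lam \<sigma>3 where lam: "lam \<in> {0..D^2}" and s3: "strict_mono \<sigma>3"
    and lc: "((\<lambda>k. l (\<sigma>1 (\<sigma>2 k))) \<circ> \<sigma>3) \<longlonglongrightarrow> lam"
    using seq_compactE[OF compact_imp_seq_compact[OF compact_Icc], of "\<lambda>k. l (\<sigma>1 (\<sigma>2 k))" 0 "D^2"] lb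
    by metis
  define \<tau> where "\<tau> k = \<sigma>1 (\<sigma>2 (\<sigma>3 k))" for k
  have stau: "strict_mono \<tau>" unfolding \<tau>_def using s1 s2 s3 by (simp add: strict_mono_def)
  have taug: "k \<le> \<tau> k" for k by (rule seq_suble[OF stau])
  have lconv: "(\<lambda>k. l (\<tau> k)) \<longlonglongrightarrow> lam" using lc by (simp add: \<tau>_def o_def)
  define hX where "hX k = hfun X (\<tau> k) (mass X (\<tau> k) (w (\<tau> k)))" for k
  define hY where "hY k = hfun Y (\<tau> k) (mass Y (\<tau> k) (v (\<tau> k)))" for k
  have hXc: "AE t in U. (\<lambda>k. hX k t) \<longlonglongrightarrow> gX t"
    using gXc
  proof eventually_elim
    case (elim t)
    have "strict_mono (\<sigma>2 \<circ> \<sigma>3)" using s2 s3 by (simp add: strict_mono_def)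
    from LIMSEQ_subseq_LIMSEQ[OF elim this] show ?case by (simp add: hX_def \<tau>_def o_def)
  qed
  have hYc: "AE t in U. (\<lambda>k. hY k t) \<longlonglongrightarrow> gY t"
    using gYc
  proof eventually_elim
    case (elim t)
    from LIMSEQ_subseq_LIMSEQ[OF elim s3] show ?case by (simp add: hY_def \<tau>_def o_def)
  qed
  have hXm: "hX k \<in> borel_measurable U" for k
    unfolding measurable_cong_sets[OF sets_U refl] hX_def by (rule hfun_meas[OF X w])
  have hYm: "hY k \<in> borel_measurable U" for k
    unfolding measurable_cong_sets[OF sets_U refl] hY_def by (rule hfun_meas[OF Yc v])
  have hXin: "hX k t \<in> X" for k t unfolding hX_def by (rule hfun_in[OF X Xne w])
  have hYin: "hY k t \<in> Y" for k t unfolding hY_def by (rule hfun_in[OF Yc Yne v])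
  have pU: "prob_space U" by (rule U_prob)
  have gXmU: "gX \<in> U \<rightarrow>\<^sub>M borel" unfolding measurable_cong_sets[OF sets_U refl] by (rule gXm)
  have gYmU: "gY \<in> U \<rightarrow>\<^sub>M borel" unfolding measurable_cong_sets[OF sets_U refl] by (rule gYm)
  define mub where "mub = distr U borel gX"
  define nub where "nub = distr U borel gY"
  have PXd: "distr U borel g \<in> PX S" if gm: "g \<in> U \<rightarrow>\<^sub>M borel" and gin: "\<And>t. g t \<in> S" and S: "closed S"
    for g :: "real \<Rightarrow> 'a" and S
  proof -
    have "prob_space (distr U borel g)" by (rule prob_space.prob_space_distr[OF pU gm])
    moreover have "emeasure (distr U borel g) S = 1"
    proof -
      have "emeasure (distr U borel g) S = emeasure U (g -` S \<inter> space U)"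
        by (rule emeasure_distr[OF gm]) (use S in simp)
      also have "g -` S \<inter> space U = space U" using gin by auto
      also have "emeasure U (space U) = 1" by (rule prob_space.emeasure_space_1[OF pU])
      finally show ?thesis .
    qed
    ultimately show ?thesis by (simp add: PX_def PM_def)
  qed
  have mub: "mub \<in> PX X" unfolding mub_def by (rule PXd[OF gXmU gXin Xcl])
  have nub: "nub \<in> PX Y" unfolding nub_def by (rule PXd[OF gYmU gYin Ycl])
  have ineqY: "lam \<le> (\<integral>x. (dist x y)^2 \<partial>mub)" if y: "y \<in> Y" for y
  proof -
    define yk where "yk k = rep Y (code Y y (\<tau> k))" for k
    have ykP: "code Y y (\<tau> k) \<in> Pk Y (\<tau> k)" for k using y by (auto simp: Pk_def)
    have ykin: "yk k \<in> Y" for k unfolding yk_def by (rule rep(1)[OF ykP])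
    have ykc: "yk \<longlonglongrightarrow> y" unfolding yk_def by (rule rep_code_conv[OF Yc y taug])
    have eq: "(\<integral>t. (dist (hX k t) (yk k))^2 \<partial>U) = (\<Sum>p\<in>Pk X (\<tau> k). w (\<tau> k) p * c p (code Y y (\<tau> k)))" for k
      unfolding hX_def c_def yk_def
      by (rule hfun_integral[OF X w]) (rule borel_measurable_continuous_onI[OF cont_d2])
    have le: "l (\<tau> k) \<le> (\<integral>t. (dist (hX k t) (yk k))^2 \<partial>U)" for k
      unfolding eq by (rule gameY[OF ykP])
    have conv: "(\<lambda>k. \<integral>t. (dist (hX k t) (yk k))^2 \<partial>U) \<longlonglongrightarrow> (\<integral>t. (dist (gX t) y)^2 \<partial>U)"
    proof (rule integral_dominated_convergence[where w="\<lambda>_. D^2"])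
      show "(\<lambda>t. (dist (gX t) y)^2) \<in> borel_measurable U"
        using measurable_compose[OF gXmU borel_measurable_continuous_onI[OF cont_d2]] by simp
      show "(\<lambda>t. (dist (hX k t) (yk k))^2) \<in> borel_measurable U" for k
        using measurable_compose[OF hXm borel_measurable_continuous_onI[OF cont_d2]] by simp
      show "integrable U (\<lambda>_. D^2)"
        by (rule finite_measure.integrable_const[OF prob_space.finite_measure[OF pU]])
      show "AE t in U. (\<lambda>k. (dist (hX k t) (yk k))^2) \<longlonglongrightarrow> (dist (gX t) y)^2"
        using hXc by eventually_elim (intro tendsto_power tendsto_dist ykc)
      show "AE t in U. norm ((dist (hX k t) (yk k))^2) \<le> D^2" for k
      proof (intro AE_I2)
        fix t
        have "dist (hX k t) (yk k) \<le> D" using D hXin ykin by auto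
        then show "norm ((dist (hX k t) (yk k))^2) \<le> D^2" by (simp add: power_mono)
      qed
    qed
    have "lam \<le> (\<integral>t. (dist (gX t) y)^2 \<partial>U)"
      by (rule LIMSEQ_le[OF lconv conv]) (use le in auto)
    also have "\<dots> = (\<integral>x. (dist x y)^2 \<partial>mub)"
      unfolding mub_def by (rule integral_distr[symmetric, OF gXmU]) (rule borel_measurable_continuous_onI[OF cont_d2])
    finally show ?thesis .
  qed
  have ineqX: "(\<integral>y. (dist x y)^2 \<partial>nub) \<le> lam" if x: "x \<in> X" for x
  proof -
    define xk where "xk k = rep X (code X x (\<tau> k))" for k
    have xkP: "code X x (\<tau> k) \<in> Pk X (\<tau> k)" for k using x by (auto simp: Pk_def)
    have xkin: "xk k \<in> X" for k unfolding xk_def by (rule rep(1)[OF xkP])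
    have xkc: "xk \<longlonglongrightarrow> x" unfolding xk_def by (rule rep_code_conv[OF X x taug])
    have eq: "(\<integral>t. (dist (xk k) (hY k t))^2 \<partial>U) = (\<Sum>q\<in>Pk Y (\<tau> k). v (\<tau> k) q * c (code X x (\<tau> k)) q)" for k
      unfolding hY_def c_def xk_def
      by (rule hfun_integral[OF Yc v]) (rule borel_measurable_continuous_onI[OF cont_d2'])
    have le: "(\<integral>t. (dist (xk k) (hY k t))^2 \<partial>U) \<le> l (\<tau> k)" for k
      unfolding eq by (rule gameX[OF xkP])
    have conv: "(\<lambda>k. \<integral>t. (dist (xk k) (hY k t))^2 \<partial>U) \<longlonglongrightarrow> (\<integral>t. (dist x (gY t))^2 \<partial>U)"
    proof (rule integral_dominated_convergence[where w="\<lambda>_. D^2"])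
      show "(\<lambda>t. (dist x (gY t))^2) \<in> borel_measurable U"
        using measurable_compose[OF gYmU borel_measurable_continuous_onI[OF cont_d2']] by simp
      show "(\<lambda>t. (dist (xk k) (hY k t))^2) \<in> borel_measurable U" for k
        using measurable_compose[OF hYm borel_measurable_continuous_onI[OF cont_d2']] by simp
      show "integrable U (\<lambda>_. D^2)"
        by (rule finite_measure.integrable_const[OF prob_space.finite_measure[OF pU]])
      show "AE t in U. (\<lambda>k. (dist (xk k) (hY k t))^2) \<longlonglongrightarrow> (dist x (gY t))^2"
        using hYc by eventually_elim (intro tendsto_power tendsto_dist xkc)
      show "AE t in U. norm ((dist (xk k) (hY k t))^2) \<le> D^2" for k
      proof (intro AE_I2)
        fix t
        have "dist (xk k) (hY k t) \<le> D" using D hYin xkin by auto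
        then show "norm ((dist (xk k) (hY k t))^2) \<le> D^2" by (simp add: power_mono)
      qed
    qed
    have "(\<integral>t. (dist x (gY t))^2 \<partial>U) \<le> lam"
      by (rule LIMSEQ_le[OF conv lconv]) (use le in auto)
    moreover have "(\<integral>t. (dist x (gY t))^2 \<partial>U) = (\<integral>y. (dist x y)^2 \<partial>nub)"
      unfolding nub_def by (rule integral_distr[symmetric, OF gYmU]) (rule borel_measurable_continuous_onI[OF cont_d2'])
    ultimately show ?thesis by simp
  qed
  define V where "V = Var mub"
  have V0: "0 \<le> V" unfolding V_def by (rule Var_nonneg)
  have lamV: "lam \<le> V"
  proof -
    obtain b where b: "barycenter mub b" using bary mub by blast
    then have bY: "b \<in> Y" using mub by (auto simp: Y_def conv_def)
    have "lam \<le> (\<integral>x. (dist x b)^2 \<partial>mub)" by (rule ineqY[OF bY])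
    also have "\<dots> = V" using b by (simp add: barycenter_def V_def)
    finally show ?thesis .
  qed
  have W2sq_nub: "W2sq x nub = ennreal (\<integral>y. (dist x y)^2 \<partial>nub)" for x by (rule W2sq_eq[OF nub Yc])
  have supnub: "(SUP x\<in>X. W2sq x nub) \<le> ennreal lam"
    by (rule SUP_least) (use ineqX in \<open>simp add: W2sq_nub ennreal_leI\<close>)
  have nubPM: "nub \<in> PM" by (rule PX_PM[OF nub])
  have Varle: "Var \<mu> \<le> lam" if mu: "\<mu> \<in> PX X" for \<mu>
  proof -
    have "ennreal (Var \<mu>) \<le> (SUP x\<in>X. W2sq x nub)"
      using Var_le_W2int[OF mu X nubPM] W2int_le_sup[OF mu Xcl] by (rule order_trans)
    also have "\<dots> \<le> ennreal lam" by (rule supnub)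
    finally show ?thesis using lam by (simp add: ennreal_le_iff)
  qed
  have lamV': "lam = V" using Varle[OF mub] lamV by (simp add: V_def)
  have maxi: "\<forall>\<mu>'\<in>PX X. Var \<mu>' \<le> Var mub" using Varle lamV' by (simp add: V_def)
  have W2nub: "W2 x nub \<le> ennreal (sqrt V)" if x: "x \<in> X" for x
  proof -
    have i0: "0 \<le> (\<integral>y. (dist x y)^2 \<partial>nub)" by (rule integral_nonneg_AE) simp
    have "W2 x nub = ennreal (sqrt (\<integral>y. (dist x y)^2 \<partial>nub))" by (rule W2_of_fin[OF W2sq_nub i0])
    also have "\<dots> \<le> ennreal (sqrt V)" using ineqX[OF x] lamV' by (simp add: ennreal_leI)
    finally show ?thesis .
  qed
  have supW2nub: "(SUP x\<in>X. W2 x nub) \<le> ennreal (sqrt V)" by (rule SUP_least) (rule W2nub)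
  have R: "circumradius X = ennreal (sqrt V)"
  proof (rule antisym)
    have "circumradius X \<le> (SUP x\<in>X. W2 x nub)" unfolding circumradius_def
      by (rule INF_lower[OF nubPM])
    then show "circumradius X \<le> ennreal (sqrt V)" using supW2nub by (rule order_trans)
    show "ennreal (sqrt V) \<le> circumradius X" unfolding circumradius_def V_def
      by (rule INF_greatest) (rule sqrt_lower[OF mub X])
  qed
  have R2: "(circumradius X)^2 = ennreal V" using V0 by (simp add: R ennreal_power)
  have circ: "circumcenter X nub"
  proof -
    have "circumradius X \<le> (SUP x\<in>X. W2 x nub)" unfolding circumradius_def
      by (rule INF_lower[OF nubPM])
    then have "(SUP x\<in>X. W2 x nub) = circumradius X" using supW2nub R by (simp add: antisym)
    then show ?thesis using nubPM by (simp add: circumcenter_def)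
  qed
  have AVar_ge: "V \<le> AVar X \<nu>" if nu: "\<nu> \<in> PX Y" for \<nu>
  proof -
    have bdd: "bdd_above ((\<lambda>x. \<integral>y. (dist x y)^2 \<partial>\<nu>) ` X)"
    proof (rule bdd_aboveI2)
      fix x assume x: "x \<in> X"
      have "(\<integral>y. (dist y x)^2 \<partial>\<nu>) \<le> D^2" by (rule integral_d2_le[OF nu Yc]) (use D x in auto)
      then show "(\<integral>y. (dist x y)^2 \<partial>\<nu>) \<le> D^2" by (simp add: dist_commute)
    qed
    have "ennreal V \<le> (SUP x\<in>X. W2sq x \<nu>)"
      using order_trans[OF Var_le_W2int[OF mub X PX_PM[OF nu]] W2int_le_sup[OF mub Xcl]] by (simp add: V_def)
    also have "\<dots> \<le> ennreal (AVar X \<nu>)"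
    proof (rule SUP_least)
      fix x assume x: "x \<in> X"
      have "(\<integral>y. (dist x y)^2 \<partial>\<nu>) \<le> AVar X \<nu>" unfolding AVar_def by (rule cSUP_upper[OF x bdd])
      then show "W2sq x \<nu> \<le> ennreal (AVar X \<nu>)" by (simp add: W2sq_eq[OF nu Yc] ennreal_leI)
    qed
    finally have h: "ennreal V \<le> ennreal (AVar X \<nu>)" .
    have "0 \<le> (\<integral>y. (dist x0 y)^2 \<partial>\<nu>)" by (rule integral_nonneg_AE) simp
    also have "\<dots> \<le> AVar X \<nu>" unfolding AVar_def by (rule cSUP_upper[OF x0 bdd])
    finally have A0: "0 \<le> AVar X \<nu>" .
    show ?thesis using h A0 by (simp add: ennreal_le_iff)
  qed
  have AVar_nub: "AVar X nub \<le> V"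
    unfolding AVar_def using Xne ineqX lamV' by (intro cSUP_least) auto
  have AVeq: "AVar X nub = V" using AVar_nub AVar_ge[OF nub] by simp
  have AEpart: "(AE x in \<mu>. W2 x \<nu>' = circumradius X)"
    if mu: "\<mu> \<in> PX X" and mmax: "\<forall>\<mu>'\<in>PX X. Var \<mu>' \<le> Var \<mu>" and cc: "circumcenter X \<nu>'" for \<mu> \<nu>'
  proof -
    have "Var mub \<le> Var \<mu>" using mmax mub by blast
    moreover have "Var \<mu> \<le> V" using Varle[OF mu] lamV' by simp
    ultimately have VmV: "Var \<mu> = V" by (simp add: V_def)
    have nuPM: "\<nu>' \<in> PM" using cc by (simp add: circumcenter_def)
    have "(SUP x\<in>X. W2 x \<nu>') = ennreal (sqrt (Var \<mu>))" using cc R VmV by (simp add: circumcenter_def)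
    from AE_circ[OF mu X nuPM this] show ?thesis using R VmV by simp
  qed
  show ?thesis
  proof (intro exI[of _ nub] conjI)
    show "circumcenter X nub" by (rule circ)
    show "\<exists>\<mu>\<in>PX X. (\<forall>\<mu>'\<in>PX X. Var \<mu>' \<le> Var \<mu>) \<and> (circumradius X)\<^sup>2 = ennreal (Var \<mu>)"
      using mub maxi R2 by (auto simp: V_def)
    show "\<exists>\<nu>'\<in>PX (conv X). (\<forall>\<nu>''\<in>PX (conv X). AVar X \<nu>' \<le> AVar X \<nu>'') \<and> (circumradius X)\<^sup>2 = ennreal (AVar X \<nu>')"
      using nub AVar_ge AVeq R2 by (auto simp: Y_def)
    show "\<forall>\<mu>\<in>PX X. (\<forall>\<mu>'\<in>PX X. Var \<mu>' \<le> Var \<mu>) \<longrightarrow>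
            (AE x in \<mu>. W2 x nub = circumradius X)
          \<and> (\<forall>\<nu>'. circumcenter X \<nu>' \<longrightarrow> (AE x in \<mu>. W2 x \<nu>' = circumradius X))"
      using AEpart circ by blast
  qed
qed

end
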